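(* Let $X$ be a locally compact roughly starlike Gromov $\delta$-hyperbolic space with base point $z_0$ and roughly-starlike constant $M$, and let $0<\varepsilon\le\varepsilon_0(\delta)$. Put $C_1=e^{-(1+\varepsilon M)}$ and $C_2=2e(2e^{\varepsilon M}-1)$. Then for all $x\in X$ and $0<r\le\frac12 d_\varepsilon(x)$, \[ B\Big(x,\frac{C_1r}{\rho_\varepsilon(x)}\Big)\subset B_\varepsilon(x,r)\subset B\Big(x,\frac{C_2r}{\rho_\varepsilon(x)}\Big). \] Moreover, if $y\in X$ and $d_\varepsilon(x,y)<C_1d_\varepsilon(x)/(2C_2)$, then \[ \frac{\rho_\varepsilon(x)}{C_2}d(x,y)<d_\varepsilon(x,y)\le e^{1/e}\rho_\varepsilon(x)\,d(x,y). \]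
   Context: Gromov $\delta$-hyperbolic: complete unbounded geodesic metric space such that for all geodesics $[x,y],[y,z],[z,x]$, each point of $[x,y]$ is within distance $\delta$ of $[y,z]\cup[z,x]$. Roughly starlike w.r.t. $z_0$ with constant $M$: each point is within distance $M$ of a geodesic ray starting at $z_0$. $\rho_\varepsilon(x)=e^{-\varepsilon d(x,z_0)}$; $d_\varepsilon(x,y)=\inf_\gamma\int_\gamma\rho_\varepsilon\,ds$ over rectifiable curves in $X$ joining $x$ to $y$; $X_\varepsilon=(X,d_\varepsilon)$, $\overline X_\varepsilon$ its completion, $\partial_\varepsilon X=\overline X_\varepsilon\setminus X_\varepsilon$, $d_\varepsilon(x)=\operatorname{dist}_\varepsilon(x,\partial_\varepsilon X)$. $B$ denotes balls w.r.t. $d$, $B_\varepsilon$ balls w.r.t. $d_\varepsilon$. $\varepsilon_0(\delta)>0$ is the Bonk–Heinonen–Koskela constant such that for $0<\varepsilon\le\varepsilon_0(\delta)$, $X_\varepsilon$ is a uniform space and $\overline X_\varepsilon$ is compact and geodesic. *)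

theory Defs
  imports "HOL-Analysis.Analysis"
begin

definition geodesic_seg :: "'a::metric_space set \<Rightarrow> 'a \<Rightarrow> 'a \<Rightarrow> bool" where
  "geodesic_seg S x y \<longleftrightarrow> (\<exists>\<gamma>::real \<Rightarrow> 'a. \<gamma> 0 = x \<and> \<gamma> (dist x y) = y \<and>
      (\<forall>s\<in>{0..dist x y}. \<forall>t\<in>{0..dist x y}. dist (\<gamma> s) (\<gamma> t) = \<bar>s - t\<bar>) \<and>
      S = \<gamma> ` {0..dist x y})"

definition geodesic_space :: "'a::metric_space itself \<Rightarrow> bool" where
  "geodesic_space _ \<longleftrightarrow> (\<forall>x y::'a. \<exists>S. geodesic_seg S x y)"

definition gromov_hyperbolic :: "'a::metric_space itself \<Rightarrow> real \<Rightarrow> bool" where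
  "gromov_hyperbolic T \<delta> \<longleftrightarrow>
     complete (UNIV::'a set) \<and> \<not> bounded (UNIV::'a set) \<and> geodesic_space T \<and>
     (\<forall>x y z::'a. \<forall>S1 S2 S3. geodesic_seg S1 x y \<and> geodesic_seg S2 y z \<and> geodesic_seg S3 z x
        \<longrightarrow> (\<forall>p\<in>S1. infdist p (S2 \<union> S3) \<le> \<delta>))"

definition geodesic_ray :: "(real \<Rightarrow> 'a::metric_space) \<Rightarrow> 'a \<Rightarrow> bool" where
  "geodesic_ray \<gamma> z0 \<longleftrightarrow> \<gamma> 0 = z0 \<and>
     (\<forall>s\<ge>0. \<forall>t\<ge>0. dist (\<gamma> s) (\<gamma> t) = \<bar>s - t\<bar>)"

definition roughly_starlike :: "'a::metric_space \<Rightarrow> real \<Rightarrow> bool" where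
  "roughly_starlike z0 M \<longleftrightarrow>
     (\<forall>x::'a. \<exists>\<gamma>. geodesic_ray \<gamma> z0 \<and> infdist x (\<gamma> ` {0..}) \<le> M)"

definition curve_cont :: "('a \<Rightarrow> 'a \<Rightarrow> real) \<Rightarrow> (real \<Rightarrow> 'a) \<Rightarrow> real \<Rightarrow> real \<Rightarrow> bool" where
  "curve_cont dd \<gamma> a b \<longleftrightarrow> (\<forall>t\<in>{a..b}. \<forall>e>0. \<exists>k>0. \<forall>s\<in>{a..b}.
       \<bar>s - t\<bar> < k \<longrightarrow> dd (\<gamma> s) (\<gamma> t) < e)"

definition polygon_sums :: "('a \<Rightarrow> 'a \<Rightarrow> real) \<Rightarrow> (real \<Rightarrow> 'a) \<Rightarrow> real \<Rightarrow> real \<Rightarrow> real set" where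
  "polygon_sums dd \<gamma> a b = {(\<Sum>i<n. dd (\<gamma> (t i)) (\<gamma> (t (Suc i)))) | t n.
       t 0 = a \<and> t n = b \<and> (\<forall>i<n. t i \<le> t (Suc i))}"

definition curve_len :: "('a \<Rightarrow> 'a \<Rightarrow> real) \<Rightarrow> (real \<Rightarrow> 'a) \<Rightarrow> real \<Rightarrow> real \<Rightarrow> real" where
  "curve_len dd \<gamma> a b = Sup (polygon_sums dd \<gamma> a b)"

definition rectifiable :: "('a \<Rightarrow> 'a \<Rightarrow> real) \<Rightarrow> (real \<Rightarrow> 'a) \<Rightarrow> real \<Rightarrow> real \<Rightarrow> bool" where
  "rectifiable dd \<gamma> a b \<longleftrightarrow> a \<le> b \<and> curve_cont dd \<gamma> a b \<and> bdd_above (polygon_sums dd \<gamma> a b)"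

definition line_integral :: "('a::metric_space \<Rightarrow> real) \<Rightarrow> (real \<Rightarrow> 'a) \<Rightarrow> real \<Rightarrow> real \<Rightarrow> real" where
  "line_integral \<rho> \<gamma> a b = integral {0..curve_len dist \<gamma> a b}
      (\<lambda>s. \<rho> (\<gamma> (SOME t. t \<in> {a..b} \<and> curve_len dist \<gamma> a t = s)))"

definition rho_eps :: "real \<Rightarrow> 'a::metric_space \<Rightarrow> 'a \<Rightarrow> real" where
  "rho_eps \<epsilon> z0 x = exp (- \<epsilon> * dist x z0)"

definition d_eps :: "real \<Rightarrow> 'a::metric_space \<Rightarrow> 'a \<Rightarrow> 'a \<Rightarrow> real" where
  "d_eps \<epsilon> z0 x y = Inf {line_integral (rho_eps \<epsilon> z0) \<gamma> a b | \<gamma> a b.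
       rectifiable dist \<gamma> a b \<and> \<gamma> a = x \<and> \<gamma> b = y}"

definition cauchy_wrt :: "('a \<Rightarrow> 'a \<Rightarrow> real) \<Rightarrow> (nat \<Rightarrow> 'a) \<Rightarrow> bool" where
  "cauchy_wrt dd s \<longleftrightarrow> (\<forall>e>0. \<exists>N. \<forall>m\<ge>N. \<forall>n\<ge>N. dd (s m) (s n) < e)"

text \<open>Points of the completion are Cauchy sequences; their distance is the limit.\<close>
definition compl_dist :: "('a \<Rightarrow> 'a \<Rightarrow> real) \<Rightarrow> (nat \<Rightarrow> 'a) \<Rightarrow> (nat \<Rightarrow> 'a) \<Rightarrow> real" where
  "compl_dist dd p q = lim (\<lambda>n. dd (p n) (q n))"

text \<open>Boundary points: Cauchy sequences not converging in X. Distance to the boundary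
  in the completion.\<close>
definition d_bd :: "('a \<Rightarrow> 'a \<Rightarrow> real) \<Rightarrow> 'a \<Rightarrow> real" where
  "d_bd dd x = Inf {lim (\<lambda>n. dd x (s n)) | s. cauchy_wrt dd s \<and>
       \<not> (\<exists>z. (\<lambda>n. dd (s n) z) \<longlonglongrightarrow> 0)}"

definition uniform_wrt :: "('a \<Rightarrow> 'a \<Rightarrow> real) \<Rightarrow> bool" where
  "uniform_wrt dd \<longleftrightarrow> (\<exists>A. \<forall>x y. \<exists>\<gamma> a b. rectifiable dd \<gamma> a b \<and> \<gamma> a = x \<and> \<gamma> b = y \<and>
      curve_len dd \<gamma> a b \<le> A * dd x y \<and>
      (\<forall>t\<in>{a..b}. min (curve_len dd \<gamma> a t) (curve_len dd \<gamma> t b) \<le> A * d_bd dd (\<gamma> t)))"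

text \<open>The completion is compact iff the space is totally bounded.\<close>
definition totally_bounded_wrt :: "('a \<Rightarrow> 'a \<Rightarrow> real) \<Rightarrow> bool" where
  "totally_bounded_wrt dd \<longleftrightarrow> (\<forall>e>0. \<exists>F. finite F \<and> (\<forall>x. \<exists>y\<in>F. dd x y < e))"

definition completion_geodesic :: "('a \<Rightarrow> 'a \<Rightarrow> real) \<Rightarrow> bool" where
  "completion_geodesic dd \<longleftrightarrow> (\<forall>p q. cauchy_wrt dd p \<and> cauchy_wrt dd q \<longrightarrow>
     (\<exists>\<gamma>::real \<Rightarrow> nat \<Rightarrow> 'a. (\<forall>u\<in>{0..compl_dist dd p q}. cauchy_wrt dd (\<gamma> u)) \<and>
        compl_dist dd (\<gamma> 0) p = 0 \<and> compl_dist dd (\<gamma> (compl_dist dd p q)) q = 0 \<and>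
        (\<forall>u\<in>{0..compl_dist dd p q}. \<forall>v\<in>{0..compl_dist dd p q}.
            compl_dist dd (\<gamma> u) (\<gamma> v) = \<bar>u - v\<bar>)))"

end

theory Submission
  imports Defs
begin

lemma part_mono:
  assumes "\<forall>i<n. t i \<le> (t (Suc i) :: real)"
  shows "j \<le> i \<Longrightarrow> i \<le> n \<Longrightarrow> t j \<le> t i"
proof (induction i)
  case 0 then show ?case by simp
next
  case (Suc i)
  show ?case
  proof (cases "j = Suc i")
    case False
    then have "j \<le> i" using Suc by simp
    then have "t j \<le> t i" using Suc by simp
    also have "\<dots> \<le> t (Suc i)" using assms Suc by simp
    finally show ?thesis .
  qed simp
qed

lemma P_intro:
  assumes "t 0 = a" "t n = b" "\<forall>i<n. t i \<le> t (Suc i)"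
  shows "(\<Sum>i<n. dist (g (t i)) (g (t (Suc i)))) \<in> polygon_sums dist g a b"
  unfolding polygon_sums_def using assms by blast

lemma P_nonneg: "s \<in> polygon_sums dist g a b \<Longrightarrow> 0 \<le> s"
  unfolding polygon_sums_def by (auto intro!: sum_nonneg)

lemma P_single: "a \<le> b \<Longrightarrow> dist (g a) (g b) \<in> polygon_sums dist g a b"
  unfolding polygon_sums_def
  by (rule CollectI, rule exI[of _ "\<lambda>i. if i = 0 then a else b"], rule exI[of _ 1]) auto

lemma P_aa: "s \<in> polygon_sums dist g a a \<Longrightarrow> s = 0"
proof -
  assume "s \<in> polygon_sums dist g a a"
  then obtain t n where s: "s = (\<Sum>i<n. dist (g (t i)) (g (t (Suc i))))"
    and t: "t 0 = a" "t n = a" "\<forall>i<n. t i \<le> t (Suc i)"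
    unfolding polygon_sums_def by blast
  have "\<forall>i\<le>n. t i = a"
  proof (intro allI impI)
    fix i assume "i \<le> n"
    then have "t 0 \<le> t i" "t i \<le> t n" using part_mono[OF t(3)] by auto
    then show "t i = a" using t by simp
  qed
  then show "s = 0" unfolding s by (intro sum.neutral) auto
qed

lemma P_snoc:
  assumes "s \<in> polygon_sums dist g a b" "b \<le> c"
  shows "s + dist (g b) (g c) \<in> polygon_sums dist g a c"
proof -
  from assms obtain t n where s: "s = (\<Sum>i<n. dist (g (t i)) (g (t (Suc i))))"
    and t: "t 0 = a" "t n = b" "\<forall>i<n. t i \<le> t (Suc i)"
    unfolding polygon_sums_def by blast
  define t' where "t' = (\<lambda>i. if i \<le> n then t i else c)"
  have "(\<Sum>i<Suc n. dist (g (t' i)) (g (t' (Suc i)))) = s + dist (g b) (g c)"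
    unfolding s t'_def using t by (auto intro!: sum.cong)
  moreover have "t' 0 = a" "t' (Suc n) = c" "\<forall>i<Suc n. t' i \<le> t' (Suc i)"
    using t assms(2) by (auto simp: t'_def less_Suc_eq)
  ultimately show ?thesis using P_intro[of t' a "Suc n" c g] by simp
qed

lemma P_concat:
  assumes "s2 \<in> polygon_sums dist g c b"
  shows "s1 \<in> polygon_sums dist g a c \<Longrightarrow> s1 + s2 \<in> polygon_sums dist g a b"
proof -
  assume s1: "s1 \<in> polygon_sums dist g a c"
  from assms obtain t n where s: "s2 = (\<Sum>i<n. dist (g (t i)) (g (t (Suc i))))"
    and t: "t 0 = c" "t n = b" "\<forall>i<n. t i \<le> t (Suc i)"
    unfolding polygon_sums_def by blast
  have "\<forall>m\<le>n. s1 + (\<Sum>i<m. dist (g (t i)) (g (t (Suc i)))) \<in> polygon_sums dist g a (t m)"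
  proof (intro allI impI)
    fix m assume "m \<le> n"
    then show "s1 + (\<Sum>i<m. dist (g (t i)) (g (t (Suc i)))) \<in> polygon_sums dist g a (t m)"
    proof (induction m)
      case 0 then show ?case using s1 t by simp
    next
      case (Suc m)
      then have "s1 + (\<Sum>i<m. dist (g (t i)) (g (t (Suc i)))) + dist (g (t m)) (g (t (Suc m)))
          \<in> polygon_sums dist g a (t (Suc m))"
        using t(3) by (intro P_snoc) auto
      then show ?case by (simp add: algebra_simps)
    qed
  qed
  then show ?thesis using s t by auto
qed

lemma P_insert:
  assumes "s \<in> polygon_sums dist g a b" "a \<le> c" "c \<le> b"
  shows "\<exists>s1\<in>polygon_sums dist g a c. \<exists>s2\<in>polygon_sums dist g c b. s \<le> s1 + s2"
proof -
  from assms obtain t n where s: "s = (\<Sum>i<n. dist (g (t i)) (g (t (Suc i))))"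
    and t: "t 0 = a" "t n = b" "\<forall>i<n. t i \<le> t (Suc i)"
    unfolding polygon_sums_def by blast
  have "\<forall>c. a \<le> c \<longrightarrow> c \<le> t m \<longrightarrow> m \<le> n \<longrightarrow> (\<exists>s1\<in>polygon_sums dist g a c.
     \<exists>s2\<in>polygon_sums dist g c (t m). (\<Sum>i<m. dist (g (t i)) (g (t (Suc i)))) \<le> s1 + s2)" for m
  proof (induction m)
    case 0
    show ?case
    proof (intro allI impI)
      fix c assume "a \<le> c" "c \<le> t 0"
      then have "c = a" using t by simp
      then show "\<exists>s1\<in>polygon_sums dist g a c. \<exists>s2\<in>polygon_sums dist g c (t 0).
        (\<Sum>i<0. dist (g (t i)) (g (t (Suc i)))) \<le> s1 + s2"
        using P_single[of a a g] t by (intro bexI[of _ 0]) auto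
    qed
  next
    case (Suc m)
    show ?case
    proof (intro allI impI)
      fix c assume c: "a \<le> c" "c \<le> t (Suc m)" "Suc m \<le> n"
      have mono: "t m \<le> t (Suc m)" using t c by simp
      have am: "a \<le> t m" using part_mono[OF t(3), of 0 m] t c by simp
      show "\<exists>s1\<in>polygon_sums dist g a c. \<exists>s2\<in>polygon_sums dist g c (t (Suc m)).
        (\<Sum>i<Suc m. dist (g (t i)) (g (t (Suc i)))) \<le> s1 + s2"
      proof (cases "c \<le> t m")
        case True
        then obtain s1 s2 where s12: "s1\<in>polygon_sums dist g a c" "s2\<in>polygon_sums dist g c (t m)"
          "(\<Sum>i<m. dist (g (t i)) (g (t (Suc i)))) \<le> s1 + s2"
          using Suc.IH c by force
        have "s2 + dist (g (t m)) (g (t (Suc m))) \<in> polygon_sums dist g c (t (Suc m))"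
          using P_snoc[OF s12(2) mono] .
        then show ?thesis using s12 by (intro bexI[OF _ s12(1)] bexI) auto
      next
        case False
        have pm: "(\<Sum>i<m. dist (g (t i)) (g (t (Suc i)))) \<in> polygon_sums dist g a (t m)"
          using P_intro[of t a m "t m" g] t c by simp
        have "(\<Sum>i<m. dist (g (t i)) (g (t (Suc i)))) + dist (g (t m)) (g c) \<in> polygon_sums dist g a c"
          using P_snoc[OF pm] False by simp
        moreover have "dist (g c) (g (t (Suc m))) \<in> polygon_sums dist g c (t (Suc m))"
          using P_single c by blast
        moreover have "dist (g (t m)) (g (t (Suc m))) \<le> dist (g (t m)) (g c) + dist (g c) (g (t (Suc m)))"
          by (rule dist_triangle)
        ultimately show ?thesis by (intro bexI) auto
      qed
    qed
  qed
  then show ?thesis using s t assms by auto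
qed


abbreviation "PS g a b \<equiv> polygon_sums dist g a b"
abbreviation "LEN g a b \<equiv> curve_len dist g a b"

lemma PS_ne: "a \<le> b \<Longrightarrow> PS g a b \<noteq> {}"
  using P_single by blast

lemma PS_aa: "PS g a a = {0}"
  using P_aa P_single[of a a g] by auto

lemma LEN_aa: "LEN g a a = 0"
  unfolding curve_len_def PS_aa by simp

lemma le_LEN: "bdd_above (PS g a b) \<Longrightarrow> s \<in> PS g a b \<Longrightarrow> s \<le> LEN g a b"
  unfolding curve_len_def by (rule cSup_upper)

lemma bdd_sub:
  assumes "bdd_above (PS g a b)" "a \<le> c" "c \<le> b"
  shows "bdd_above (PS g a c)" "bdd_above (PS g c b)"
proof -
  from assms(1) obtain B where B: "\<And>s. s \<in> PS g a b \<Longrightarrow> s \<le> B" by (auto simp: bdd_above_def)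
  show "bdd_above (PS g a c)"
  proof (rule bdd_aboveI)
    fix s assume s: "s \<in> PS g a c"
    have "s + dist (g c) (g b) \<in> PS g a b" using P_concat[OF P_single s] assms by simp
    then show "s \<le> B" using B[of "s + dist (g c) (g b)"] by (smt (verit) zero_le_dist)
  qed
  show "bdd_above (PS g c b)"
  proof (rule bdd_aboveI)
    fix s assume s: "s \<in> PS g c b"
    have "dist (g a) (g c) + s \<in> PS g a b" using P_concat[OF s P_single] assms by simp
    then show "s \<le> B" using B[of "dist (g a) (g c) + s"] by (smt (verit) zero_le_dist)
  qed
qed

lemma LEN_add:
  assumes "bdd_above (PS g a b)" "a \<le> c" "c \<le> b"
  shows "LEN g a b = LEN g a c + LEN g c b"
proof -
  note bd = bdd_sub[OF assms]
  have le: "LEN g a b \<le> LEN g a c + LEN g c b"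
    unfolding curve_len_def[of _ _ a b]
  proof (rule cSup_least)
    show "PS g a b \<noteq> {}" by (meson PS_ne assms order_trans)
    fix s assume "s \<in> PS g a b"
    then obtain s1 s2 where "s1 \<in> PS g a c" "s2 \<in> PS g c b" "s \<le> s1 + s2"
      using P_insert assms by blast
    then show "s \<le> LEN g a c + LEN g c b" using le_LEN[OF bd(1)] le_LEN[OF bd(2)]
      by (smt (verit))
  qed
  have "\<forall>s2\<in>PS g c b. LEN g a c \<le> LEN g a b - s2"
  proof
    fix s2 assume s2: "s2 \<in> PS g c b"
    show "LEN g a c \<le> LEN g a b - s2"
      unfolding curve_len_def[of _ _ a c]
    proof (rule cSup_least)
      show "PS g a c \<noteq> {}" using PS_ne assms(2) by blast
      fix s1 assume "s1 \<in> PS g a c"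
      then have "s1 + s2 \<in> PS g a b" using P_concat[OF s2] by blast
      then show "s1 \<le> LEN g a b - s2" using le_LEN[OF assms(1)] by force
    qed
  qed
  then have "LEN g c b \<le> LEN g a b - LEN g a c"
    unfolding curve_len_def[of _ _ c b]
    by (intro cSup_least) (use PS_ne assms in auto)
  with le show ?thesis by simp
qed

lemma bdd_union:
  assumes "bdd_above (PS g a c)" "bdd_above (PS g c b)" "a \<le> c" "c \<le> b"
  shows "bdd_above (PS g a b)"
proof (rule bdd_aboveI)
  fix s assume "s \<in> PS g a b"
  then obtain s1 s2 where "s1 \<in> PS g a c" "s2 \<in> PS g c b" "s \<le> s1 + s2"
    using P_insert assms by blast
  then show "s \<le> LEN g a c + LEN g c b" using le_LEN[OF assms(1)] le_LEN[OF assms(2)]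
    by (smt (verit))
qed

lemma dist_le_LEN: "bdd_above (PS g a b) \<Longrightarrow> a \<le> b \<Longrightarrow> dist (g a) (g b) \<le> LEN g a b"
  using le_LEN P_single by blast

lemma LEN_nonneg: "bdd_above (PS g a b) \<Longrightarrow> a \<le> b \<Longrightarrow> 0 \<le> LEN g a b"
  using dist_le_LEN zero_le_dist order_trans by blast

lemma LEN_mono:
  assumes "bdd_above (PS g a b)" "a \<le> t1" "t1 \<le> t2" "t2 \<le> b"
  shows "LEN g a t1 \<le> LEN g a t2"
proof -
  have b2: "bdd_above (PS g a t2)" by (meson bdd_sub(1) assms order_trans)
  then have "LEN g a t2 = LEN g a t1 + LEN g t1 t2" using LEN_add assms by auto
  moreover have "0 \<le> LEN g t1 t2" using bdd_sub[OF b2, of t1] assms LEN_nonneg by auto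
  ultimately show ?thesis by simp
qed


lemma curve_cont_iff: "curve_cont dist g a b \<longleftrightarrow> continuous_on {a..b} g"
  unfolding curve_cont_def continuous_on_iff dist_real_def by auto

lemma P_left:
  assumes "t 0 = a" "\<forall>i<n. t i \<le> t (Suc i)"
  shows "a \<le> c \<Longrightarrow> c \<le> t n \<Longrightarrow> (\<forall>i\<le>n. t i \<le> c \<or> t i = t n) \<Longrightarrow>
    \<exists>s1\<in>PS g a c. (\<Sum>i<n. dist (g (t i)) (g (t (Suc i)))) \<le> s1 + dist (g c) (g (t n))"
  using assms(2)
proof (induction n)
  case 0
  then have "c = a" using assms by simp
  then show ?case using PS_aa assms by auto
next
  case (Suc n)
  show ?case
  proof (cases "t n = t (Suc n)")
    case True
    have "\<forall>i\<le>n. t i \<le> c \<or> t i = t n" using Suc.prems True by auto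
    then obtain s1 where "s1 \<in> PS g a c" "(\<Sum>i<n. dist (g (t i)) (g (t (Suc i)))) \<le> s1 + dist (g c) (g (t n))"
      using Suc True by auto
    then show ?thesis using True by auto
  next
    case False
    have "t n \<le> c \<or> t n = t (Suc n)" using Suc.prems(3) by simp
    then have tn: "t n \<le> c" using False by simp
    have "(\<Sum>i<n. dist (g (t i)) (g (t (Suc i)))) \<in> PS g a (t n)"
      using P_intro[of t a n "t n" g] assms Suc.prems by simp
    then have "(\<Sum>i<n. dist (g (t i)) (g (t (Suc i)))) + dist (g (t n)) (g c) \<in> PS g a c"
      using P_snoc tn by blast
    moreover have "dist (g (t n)) (g (t (Suc n))) \<le> dist (g (t n)) (g c) + dist (g c) (g (t (Suc n)))"
      by (rule dist_triangle)
    ultimately show ?thesis by (intro bexI) auto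
  qed
qed

lemma P_right:
  assumes "t 0 = a" "\<forall>i<n. t i \<le> t (Suc i)"
  shows "a \<le> c \<Longrightarrow> c \<le> t n \<Longrightarrow> (\<forall>i\<le>n. t i = a \<or> c \<le> t i) \<Longrightarrow>
    \<exists>s2\<in>PS g c (t n). (\<Sum>i<n. dist (g (t i)) (g (t (Suc i)))) \<le> dist (g a) (g c) + s2"
  using assms(2)
proof (induction n)
  case 0
  then have "c = a" using assms by simp
  then show ?case using PS_aa assms by auto
next
  case (Suc n)
  have mono: "t n \<le> t (Suc n)" using Suc.prems by simp
  show ?case
  proof (cases "c \<le> t n")
    case True
    then obtain s2 where s2: "s2 \<in> PS g c (t n)" "(\<Sum>i<n. dist (g (t i)) (g (t (Suc i)))) \<le> dist (g a) (g c) + s2"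
      using Suc by auto
    have "s2 + dist (g (t n)) (g (t (Suc n))) \<in> PS g c (t (Suc n))" using P_snoc[OF s2(1) mono] .
    then show ?thesis using s2 by (intro bexI) auto
  next
    case False
    have "t n = a \<or> c \<le> t n" using Suc.prems(3) by simp
    then have tn: "t n = a" using False by simp
    have "(\<Sum>i<n. dist (g (t i)) (g (t (Suc i)))) \<in> PS g a (t n)"
      using P_intro[of t a n "t n" g] assms Suc.prems by simp
    then have z: "(\<Sum>i<n. dist (g (t i)) (g (t (Suc i)))) = 0" using tn P_aa by simp
    have "dist (g (t n)) (g (t (Suc n))) \<le> dist (g a) (g c) + dist (g c) (g (t (Suc n)))"
      using tn dist_triangle by metis
    moreover have "dist (g c) (g (t (Suc n))) \<in> PS g c (t (Suc n))" using P_single Suc.prems by blast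
    ultimately show ?thesis using z by (intro bexI) auto
  qed
qed

lemma rect_def': "rectifiable dist g a b \<longleftrightarrow> a \<le> b \<and> continuous_on {a..b} g \<and> bdd_above (PS g a b)"
  unfolding rectifiable_def curve_cont_iff by simp

lemma cont_at_pt:
  fixes a b t0 :: real
  assumes "continuous_on {a..b} g" "t0 \<in> {a..b}" "0 < e"
  obtains k where "k > 0" "\<And>s. s \<in> {a..b} \<Longrightarrow> \<bar>s - t0\<bar> < k \<Longrightarrow> dist (g s) (g t0) < e"
proof -
  have "\<exists>d>0. \<forall>x'\<in>{a..b}. dist x' t0 < d \<longrightarrow> dist (g x') (g t0) < e"
    using assms unfolding continuous_on_iff by blast
  then show ?thesis using that unfolding dist_real_def by blast
qed

lemma LEN_left:
  assumes r: "rectifiable dist g a b" and t0: "a \<le> t0" "t0 \<le> b" and e: "0 < e"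
  shows "\<exists>d>0. \<forall>t. a \<le> t \<and> t \<le> t0 \<and> t0 - d < t \<longrightarrow> LEN g a t0 - LEN g a t < e"
proof (cases "t0 = a")
  case True
  then show ?thesis using e by (intro exI[of _ 1]) auto
next
  case False
  then have at0: "a < t0" using t0 by simp
  from r have ab: "a \<le> b" and cont: "continuous_on {a..b} g" and bd: "bdd_above (PS g a b)"
    unfolding rect_def' by auto
  have bd0: "bdd_above (PS g a t0)" using bdd_sub[OF bd] t0 by auto
  have "LEN g a t0 - e/2 < Sup (PS g a t0)" using e unfolding curve_len_def by simp
  then obtain s where s: "s \<in> PS g a t0" "LEN g a t0 - e/2 < s"
    using less_cSupE PS_ne[of a t0 g] at0 by (metis less_eq_real_def)
  then obtain p n where sp: "s = (\<Sum>i<n. dist (g (p i)) (g (p (Suc i))))"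
    and p: "p 0 = a" "p n = t0" "\<forall>i<n. p i \<le> p (Suc i)"
    unfolding polygon_sums_def by blast
  define C where "C = p ` {i. i \<le> n \<and> p i < t0}"
  have fC: "finite C" unfolding C_def by simp
  have C0: "a \<in> C" unfolding C_def using p at0 by (auto intro!: image_eqI[of _ _ 0])
  define c0 where "c0 = Max C"
  have c0: "c0 < t0" unfolding c0_def using fC C0 by (subst Max_less_iff) (auto simp: C_def)
  have c0b: "\<And>i. i \<le> n \<Longrightarrow> p i < t0 \<Longrightarrow> p i \<le> c0" unfolding c0_def C_def
    using fC C_def by (intro Max_ge) auto
  obtain k where k: "k > 0" "\<And>s. s \<in> {a..b} \<Longrightarrow> \<bar>s - t0\<bar> < k \<Longrightarrow> dist (g s) (g t0) < e/2"
    using cont_at_pt[OF cont, of t0 "e/2"] t0 e by auto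
  show ?thesis
  proof (intro exI[of _ "min (t0 - c0) k"] conjI allI impI)
    show "0 < min (t0 - c0) k" using c0 k by simp
    fix t assume t: "a \<le> t \<and> t \<le> t0 \<and> t0 - min (t0 - c0) k < t"
    have "\<forall>i\<le>n. p i \<le> t \<or> p i = p n"
    proof (intro allI impI)
      fix i assume i: "i \<le> n"
      have "p i \<le> t0" using part_mono[OF p(3), of i n] i p by simp
      then show "p i \<le> t \<or> p i = p n" using c0b[OF i] t p by force
    qed
    then obtain s1 where s1: "s1 \<in> PS g a t" "s \<le> s1 + dist (g t) (g t0)"
      using P_left[OF p(1) p(3), of t g] t p sp by auto
    have "s1 \<le> LEN g a t" using le_LEN[OF _ s1(1)] bdd_sub[OF bd, of t] t t0 by auto
    moreover have "dist (g t) (g t0) < e/2" using k(2)[of t] t t0 by auto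
    ultimately show "LEN g a t0 - LEN g a t < e" using s s1 by simp
  qed
qed

lemma LEN_right:
  assumes r: "rectifiable dist g a b" and t0: "a \<le> t0" "t0 \<le> b" and e: "0 < e"
  shows "\<exists>d>0. \<forall>t. t0 \<le> t \<and> t \<le> b \<and> t < t0 + d \<longrightarrow> LEN g a t - LEN g a t0 < e"
proof (cases "t0 = b")
  case True
  then show ?thesis using e by (intro exI[of _ 1]) auto
next
  case False
  then have t0b: "t0 < b" using t0 by simp
  from r have ab: "a \<le> b" and cont: "continuous_on {a..b} g" and bd: "bdd_above (PS g a b)"
    unfolding rect_def' by auto
  have bd0: "bdd_above (PS g t0 b)" using bdd_sub[OF bd] t0 by auto
  have "LEN g t0 b - e/2 < Sup (PS g t0 b)" using e unfolding curve_len_def by simp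
  then obtain s where s: "s \<in> PS g t0 b" "LEN g t0 b - e/2 < s"
    using less_cSupE PS_ne[of t0 b g] t0b by (metis less_eq_real_def)
  then obtain p n where sp: "s = (\<Sum>i<n. dist (g (p i)) (g (p (Suc i))))"
    and p: "p 0 = t0" "p n = b" "\<forall>i<n. p i \<le> p (Suc i)"
    unfolding polygon_sums_def by blast
  define C where "C = p ` {i. i \<le> n \<and> t0 < p i}"
  have fC: "finite C" unfolding C_def by simp
  have C0: "b \<in> C" unfolding C_def using p t0b by (auto intro!: image_eqI[of _ _ n])
  define c1 where "c1 = Min C"
  have c1: "t0 < c1" unfolding c1_def using fC C0 by (subst Min_gr_iff) (auto simp: C_def)
  have c1b: "\<And>i. i \<le> n \<Longrightarrow> t0 < p i \<Longrightarrow> c1 \<le> p i" unfolding c1_def C_def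
    using fC C_def by (intro Min_le) auto
  obtain k where k: "k > 0" "\<And>s. s \<in> {a..b} \<Longrightarrow> \<bar>s - t0\<bar> < k \<Longrightarrow> dist (g s) (g t0) < e/2"
    using cont_at_pt[OF cont, of t0 "e/2"] t0 e by auto
  show ?thesis
  proof (intro exI[of _ "min (c1 - t0) k"] conjI allI impI)
    show "0 < min (c1 - t0) k" using c1 k by simp
    fix t assume t: "t0 \<le> t \<and> t \<le> b \<and> t < t0 + min (c1 - t0) k"
    have "\<forall>i\<le>n. p i = t0 \<or> t \<le> p i"
    proof (intro allI impI)
      fix i assume i: "i \<le> n"
      have "t0 \<le> p i" using part_mono[OF p(3), of 0 i] i p by simp
      then show "p i = t0 \<or> t \<le> p i" using c1b[OF i] t by force
    qed
    then obtain s2 where s2: "s2 \<in> PS g t b" "s \<le> dist (g t0) (g t) + s2"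
      using P_right[OF p(1) p(3), of t g] t p sp by auto
    have bt: "bdd_above (PS g t b)" using bdd_sub[OF bd0, of t] t by auto
    have "s2 \<le> LEN g t b" using le_LEN[OF bt s2(1)] .
    moreover have "dist (g t0) (g t) < e/2" using k(2)[of t] t t0 by (auto simp: dist_commute)
    moreover have "LEN g t0 b = LEN g t0 t + LEN g t b" using LEN_add[OF bd0, of t] t by simp
    moreover have "LEN g a t = LEN g a t0 + LEN g t0 t"
      using LEN_add[OF bdd_sub(1)[OF bd, of t], of t0] t t0 by simp
    ultimately show "LEN g a t - LEN g a t0 < e" using s s2 by simp
  qed
qed

lemma LEN_cont:
  assumes r: "rectifiable dist g a b"
  shows "continuous_on {a..b} (\<lambda>t. LEN g a t)"
  unfolding continuous_on_iff
proof (intro ballI allI impI)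
  fix t0 e assume t0: "t0 \<in> {a..b}" and e: "(0::real) < e"
  have bd: "bdd_above (PS g a b)" using r unfolding rect_def' by auto
  obtain d1 where d1: "d1 > 0" "\<forall>t. a \<le> t \<and> t \<le> t0 \<and> t0 - d1 < t \<longrightarrow> LEN g a t0 - LEN g a t < e"
    using LEN_left[OF r _ _ e, of t0] t0 by auto
  obtain d2 where d2: "d2 > 0" "\<forall>t. t0 \<le> t \<and> t \<le> b \<and> t < t0 + d2 \<longrightarrow> LEN g a t - LEN g a t0 < e"
    using LEN_right[OF r _ _ e, of t0] t0 by auto
  show "\<exists>d>0. \<forall>t\<in>{a..b}. dist t t0 < d \<longrightarrow> dist (LEN g a t) (LEN g a t0) < e"
  proof (intro exI[of _ "min d1 d2"] conjI ballI impI)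
    show "0 < min d1 d2" using d1 d2 by simp
    fix t assume t: "t \<in> {a..b}" "dist t t0 < min d1 d2"
    show "dist (LEN g a t) (LEN g a t0) < e"
    proof (cases "t \<le> t0")
      case True
      then have "LEN g a t \<le> LEN g a t0" using LEN_mono[OF bd] t t0 by auto
      then show ?thesis using d1(2)[rule_format, of t] t True by (auto simp: dist_real_def)
    next
      case False
      then have "LEN g a t0 \<le> LEN g a t" using LEN_mono[OF bd] t t0 by auto
      then show ?thesis using d2(2)[rule_format, of t] t False by (auto simp: dist_real_def)
    qed
  qed
qed


definition arcp :: "(real \<Rightarrow> 'a::metric_space) \<Rightarrow> real \<Rightarrow> real \<Rightarrow> real \<Rightarrow> 'a" where
  "arcp g a b s = g (SOME t. t \<in> {a..b} \<and> LEN g a t = s)"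

lemma LI_eq: "line_integral \<rho> g a b = integral {0..LEN g a b} (\<lambda>s. \<rho> (arcp g a b s))"
  unfolding line_integral_def arcp_def by simp

lemma rect_bdd: "rectifiable dist g a b \<Longrightarrow> bdd_above (PS g a b)"
  and rect_le: "rectifiable dist g a b \<Longrightarrow> a \<le> b"
  and rect_cont: "rectifiable dist g a b \<Longrightarrow> continuous_on {a..b} g"
  unfolding rect_def' by auto

lemma LEN_ex:
  assumes r: "rectifiable dist g a b" and s: "0 \<le> s" "s \<le> LEN g a b"
  shows "\<exists>t\<in>{a..b}. LEN g a t = s"
proof -
  have "\<exists>x\<ge>a. x \<le> b \<and> LEN g a x = s"
    using IVT'[of "\<lambda>t. LEN g a t" a s b] LEN_cont[OF r] s rect_le[OF r] by (simp add: LEN_aa)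
  then show ?thesis by auto
qed

lemma LEN_diff:
  assumes r: "rectifiable dist g a b" and t: "t1 \<in> {a..b}" "t2 \<in> {a..b}" "t1 \<le> t2"
  shows "dist (g t1) (g t2) \<le> LEN g a t2 - LEN g a t1"
proof -
  have bd: "bdd_above (PS g a t2)" using bdd_sub(1)[OF rect_bdd[OF r], of t2] t by auto
  have "LEN g a t2 = LEN g a t1 + LEN g t1 t2" using LEN_add[OF bd, of t1] t by auto
  moreover have "dist (g t1) (g t2) \<le> LEN g t1 t2"
    using dist_le_LEN bdd_sub(2)[OF bd, of t1] t by auto
  ultimately show ?thesis by simp
qed

lemma LEN_dist:
  assumes r: "rectifiable dist g a b" and t: "t1 \<in> {a..b}" "t2 \<in> {a..b}"
  shows "dist (g t1) (g t2) \<le> \<bar>LEN g a t1 - LEN g a t2\<bar>"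
proof (cases "t1 \<le> t2")
  case True then show ?thesis using LEN_diff[OF r t True] by simp
next
  case False then show ?thesis using LEN_diff[OF r t(2) t(1)] by (simp add: dist_commute)
qed

lemma same_len:
  assumes r: "rectifiable dist g a b" and t: "t1 \<in> {a..b}" "t2 \<in> {a..b}" "LEN g a t1 = LEN g a t2"
  shows "g t1 = g t2"
  using LEN_dist[OF r t(1,2)] t(3) by simp

lemma arcp_eq:
  assumes r: "rectifiable dist g a b" and t: "t \<in> {a..b}" "LEN g a t = s"
  shows "arcp g a b s = g t"
proof -
  have "\<exists>t. t \<in> {a..b} \<and> LEN g a t = s" using t by blast
  then have "(SOME t. t \<in> {a..b} \<and> LEN g a t = s) \<in> {a..b} \<and> LEN g a (SOME t. t \<in> {a..b} \<and> LEN g a t = s) = s"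
    by (rule someI_ex)
  then have "g (SOME t. t \<in> {a..b} \<and> LEN g a t = s) = g t"
    using same_len[OF r, of "SOME t. t \<in> {a..b} \<and> LEN g a t = s" t] t by simp
  then show ?thesis unfolding arcp_def .
qed

lemma LEN_ab: "rectifiable dist g a b \<Longrightarrow> 0 \<le> LEN g a b"
  by (rule LEN_nonneg[OF rect_bdd rect_le])

lemma arcp_pt:
  assumes r: "rectifiable dist g a b" and s: "s \<in> {0..LEN g a b}"
  obtains t where "t \<in> {a..b}" "LEN g a t = s" "arcp g a b s = g t"
  using LEN_ex[OF r] s arcp_eq[OF r] by force

lemma arcp_lip:
  assumes r: "rectifiable dist g a b" and s: "s1 \<in> {0..LEN g a b}" "s2 \<in> {0..LEN g a b}"
  shows "dist (arcp g a b s1) (arcp g a b s2) \<le> \<bar>s1 - s2\<bar>"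
proof -
  obtain t1 where t1: "t1 \<in> {a..b}" "LEN g a t1 = s1" "arcp g a b s1 = g t1" using arcp_pt[OF r s(1)] .
  obtain t2 where t2: "t2 \<in> {a..b}" "LEN g a t2 = s2" "arcp g a b s2 = g t2" using arcp_pt[OF r s(2)] .
  show ?thesis using LEN_dist[OF r t1(1) t2(1)] t1 t2 by simp
qed

lemma arcp_0: "rectifiable dist g a b \<Longrightarrow> arcp g a b 0 = g a"
proof -
  assume r: "rectifiable dist g a b"
  show ?thesis using arcp_eq[OF r, of a 0] LEN_aa[of g a] rect_le[OF r] by simp
qed

lemma arcp_L: "rectifiable dist g a b \<Longrightarrow> arcp g a b (LEN g a b) = g b"
  using arcp_eq[of g a b b] rect_le by auto

lemma arcp_cont:
  assumes r: "rectifiable dist g a b"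
  shows "continuous_on {0..LEN g a b} (arcp g a b)"
  unfolding continuous_on_iff
proof (intro ballI allI impI)
  fix x e assume x: "x \<in> {0..LEN g a b}" and e: "(0::real) < e"
  show "\<exists>d>0. \<forall>x'\<in>{0..LEN g a b}. dist x' x < d \<longrightarrow> dist (arcp g a b x') (arcp g a b x) < e"
  proof (intro exI[of _ e] conjI ballI impI)
    fix x' assume x': "x' \<in> {0..LEN g a b}" "dist x' x < e"
    have "dist (arcp g a b x') (arcp g a b x) \<le> \<bar>x' - x\<bar>" by (rule arcp_lip[OF r x'(1) x])
    then show "dist (arcp g a b x') (arcp g a b x) < e" using x'(2) by (simp add: dist_real_def)
  qed (use e in simp)
qed

lemma LI_integrable:
  fixes \<rho> :: "'a::metric_space \<Rightarrow> real"
  assumes r: "rectifiable dist g a b" and c: "continuous_on UNIV \<rho>"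
  shows "(\<lambda>s. \<rho> (arcp g a b s)) integrable_on {0..LEN g a b}"
proof -
  have "continuous_on {0..LEN g a b} (\<lambda>s. \<rho> (arcp g a b s))"
    using continuous_on_compose[OF arcp_cont[OF r], of \<rho>] c
    by (simp add: o_def continuous_on_subset)
  then show ?thesis by (rule integrable_continuous_real)
qed

lemma restrict_rect:
  assumes r: "rectifiable dist g a b" and t: "t \<in> {a..b}"
  shows "rectifiable dist g a t"
proof -
  have "bdd_above (PS g a t)" using bdd_sub(1)[OF rect_bdd[OF r], of t] t by simp
  moreover have "continuous_on {a..t} g" using continuous_on_subset[OF rect_cont[OF r], of "{a..t}"] t by simp
  ultimately show ?thesis unfolding rect_def' using t by simp
qed

lemma restrict_arcp:
  assumes r: "rectifiable dist g a b" and t: "t \<in> {a..b}" and s: "s \<in> {0..LEN g a t}"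
  shows "arcp g a t s = arcp g a b s"
proof -
  obtain t' where t': "t' \<in> {a..t}" "LEN g a t' = s" "arcp g a t s = g t'"
    using arcp_pt[OF restrict_rect[OF r t] s] .
  then show ?thesis using arcp_eq[OF r, of t' s] t by auto
qed

lemma restrict_LI:
  fixes \<rho> :: "'a::metric_space \<Rightarrow> real"
  assumes r: "rectifiable dist g a b" and t: "t \<in> {a..b}" and c: "continuous_on UNIV \<rho>"
    and pos: "\<And>x. 0 \<le> \<rho> x"
  shows "line_integral \<rho> g a t \<le> line_integral \<rho> g a b"
proof -
  have L: "0 \<le> LEN g a t" "LEN g a t \<le> LEN g a b"
    using LEN_ab[OF restrict_rect[OF r t]] LEN_mono[OF rect_bdd[OF r], of t b] t rect_le[OF r] by auto
  have "line_integral \<rho> g a t = integral {0..LEN g a t} (\<lambda>s. \<rho> (arcp g a b s))"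
    unfolding LI_eq using restrict_arcp[OF r t] by (intro integral_cong) auto
  also have "\<dots> \<le> integral {0..LEN g a t} (\<lambda>s. \<rho> (arcp g a b s)) + integral {LEN g a t..LEN g a b} (\<lambda>s. \<rho> (arcp g a b s))"
  proof -
    have "(\<lambda>s. \<rho> (arcp g a b s)) integrable_on {LEN g a t..LEN g a b}"
      using integrable_on_subinterval[OF LI_integrable[OF r c], of "LEN g a t" "LEN g a b"] L by simp
    then have "0 \<le> integral {LEN g a t..LEN g a b} (\<lambda>s. \<rho> (arcp g a b s))"
      by (rule integral_nonneg) (rule pos)
    then show ?thesis by simp
  qed
  also have "\<dots> = line_integral \<rho> g a b"
    unfolding LI_eq using Henstock_Kurzweil_Integration.integral_combine[OF L LI_integrable[OF r c]] .
  finally show ?thesis .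
qed

lemma isom_PS:
  assumes iso: "\<forall>s\<in>{a..b}. \<forall>t\<in>{a..b}. dist (g s) (g t) = \<bar>s - t\<bar>" and t: "a \<le> t" "t \<le> b"
  shows "PS g a t = {t - a}"
proof -
  have one: "x = t - a" if "x \<in> PS g a t" for x
  proof -
    from that obtain p n where sp: "x = (\<Sum>i<n. dist (g (p i)) (g (p (Suc i))))"
      and p: "p 0 = a" "p n = t" "\<forall>i<n. p i \<le> p (Suc i)"
      unfolding polygon_sums_def by blast
    have "p i \<in> {a..b}" if "i \<le> n" for i
    proof -
      have "p 0 \<le> p i" "p i \<le> p n" using part_mono[OF p(3), of 0 i] part_mono[OF p(3), of i n] that by auto
      then show ?thesis using p t by simp
    qed
    then have "x = (\<Sum>i<n. p (Suc i) - p i)" unfolding sp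
    proof (intro sum.cong refl)
      fix i assume i: "i \<in> {..<n}" and pin: "\<And>i. i \<le> n \<Longrightarrow> p i \<in> {a..b}"
      have "dist (g (p i)) (g (p (Suc i))) = \<bar>p i - p (Suc i)\<bar>"
        using iso pin[of i] pin[of "Suc i"] i by simp
      then show "dist (g (p i)) (g (p (Suc i))) = p (Suc i) - p i" using p(3) i by simp
    qed
    then show ?thesis using sum_lessThan_telescope[of p n] p by simp
  qed
  have "dist (g a) (g t) = t - a" using iso t by simp
  then have two: "t - a \<in> PS g a t" using P_single[of a t g] t by simp
  show ?thesis
  proof (intro equalityI subsetI)
    fix x assume "x \<in> PS g a t" then show "x \<in> {t - a}" using one by simp
  next
    fix x assume "x \<in> {t - a}" then show "x \<in> PS g a t" using two by simp
  qed
qed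

lemma isom_curve:
  fixes \<rho> :: "'a::metric_space \<Rightarrow> real"
  assumes iso: "\<forall>s\<in>{a..b}. \<forall>t\<in>{a..b}. dist (g s) (g t) = \<bar>s - t\<bar>" and ab: "a \<le> b"
  shows "rectifiable dist g a b" "\<And>t. t \<in> {a..b} \<Longrightarrow> LEN g a t = t - a"
    "line_integral \<rho> g a b = integral {0..b - a} (\<lambda>s. \<rho> (g (a + s)))"
proof -
  show L: "\<And>t. t \<in> {a..b} \<Longrightarrow> LEN g a t = t - a"
    unfolding curve_len_def using isom_PS[OF iso] by simp
  have "continuous_on {a..b} g" unfolding continuous_on_iff
  proof (intro ballI allI impI)
    fix x e assume x: "x \<in> {a..b}" and e: "(0::real) < e"
    show "\<exists>d>0. \<forall>x'\<in>{a..b}. dist x' x < d \<longrightarrow> dist (g x') (g x) < e"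
    proof (intro exI[of _ e] conjI ballI impI)
      fix x' assume "x' \<in> {a..b}" "dist x' x < e"
      then show "dist (g x') (g x) < e" using iso x by (simp add: dist_real_def)
    qed (rule e)
  qed
  then show r: "rectifiable dist g a b"
    unfolding rect_def' using isom_PS[OF iso, of b] ab by simp
  show "line_integral \<rho> g a b = integral {0..b - a} (\<lambda>s. \<rho> (g (a + s)))"
  proof -
    have Lb: "LEN g a b = b - a" using L ab by simp
    have "arcp g a b s = g (a + s)" if "s \<in> {0..b-a}" for s
      using arcp_eq[OF r, of "a+s" s] L[of "a+s"] that by simp
    then show ?thesis unfolding LI_eq Lb by (intro integral_cong) auto
  qed
qed


lemma PS_cong_sub:
  assumes "\<forall>t\<in>{a..b}. g t = h t"
  shows "PS g a b \<subseteq> PS h a b"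
proof
  fix x assume "x \<in> PS g a b"
  then obtain p n where sp: "x = (\<Sum>i<n. dist (g (p i)) (g (p (Suc i))))"
    and p: "p 0 = a" "p n = b" "\<forall>i<n. p i \<le> p (Suc i)"
    unfolding polygon_sums_def by blast
  have pin: "p i \<in> {a..b}" if "i \<le> n" for i
  proof -
    have "p 0 \<le> p i" "p i \<le> p n" using part_mono[OF p(3), of 0 i] part_mono[OF p(3), of i n] that by auto
    then show ?thesis using p by simp
  qed
  have "x = (\<Sum>i<n. dist (h (p i)) (h (p (Suc i))))" unfolding sp
  proof (intro sum.cong refl)
    fix i assume i: "i \<in> {..<n}"
    then show "dist (g (p i)) (g (p (Suc i))) = dist (h (p i)) (h (p (Suc i)))"
      using assms pin[of i] pin[of "Suc i"] by simp
  qed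
  then show "x \<in> PS h a b" using P_intro[of p a n b h] p by simp
qed

lemma PS_cong: "\<forall>t\<in>{a..b}. g t = h t \<Longrightarrow> PS g a b = PS h a b"
  using PS_cong_sub[of a b g h] PS_cong_sub[of a b h g] by auto

lemma PS_shift_sub: "PS (\<lambda>t. g (t + k)) a b \<subseteq> PS g (a + k) (b + k)"
proof
  fix x assume "x \<in> PS (\<lambda>t. g (t + k)) a b"
  then obtain p n where sp: "x = (\<Sum>i<n. dist (g (p i + k)) (g (p (Suc i) + k)))"
    and p: "p 0 = a" "p n = b" "\<forall>i<n. p i \<le> p (Suc i)"
    unfolding polygon_sums_def by blast
  then show "x \<in> PS g (a + k) (b + k)" using P_intro[of "\<lambda>i. p i + k" "a + k" n "b + k" g] by simp
qed

lemma PS_shift: "PS (\<lambda>t. g (t + k)) a b = PS g (a + k) (b + k)"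
proof
  show "PS (\<lambda>t. g (t + k)) a b \<subseteq> PS g (a + k) (b + k)" by (rule PS_shift_sub)
  have "PS (\<lambda>t. g (t - k + k)) (a + k) (b + k) \<subseteq> PS (\<lambda>t. g (t + k)) (a + k + - k) (b + k + - k)"
    using PS_shift_sub[of "\<lambda>t. g (t + k)" "-k" "a + k" "b + k"] by simp
  then show "PS g (a + k) (b + k) \<subseteq> PS (\<lambda>t. g (t + k)) a b" by simp
qed

lemma concat_curve:
  fixes \<rho> :: "'a::metric_space \<Rightarrow> real"
  assumes r1: "rectifiable dist g1 a b" and r2: "rectifiable dist g2 c d" and j: "g1 b = g2 c"
    and cr: "continuous_on UNIV \<rho>"
  shows "\<exists>g a' b'. rectifiable dist g a' b' \<and> g a' = g1 a \<and> g b' = g2 d \<and>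
     line_integral \<rho> g a' b' = line_integral \<rho> g1 a b + line_integral \<rho> g2 c d"
proof -
  define h where "h = (\<lambda>t. if t \<le> b then g1 t else g2 (t - b + c))"
  define e where "e = b + (d - c)"
  have ab: "a \<le> b" and cd: "c \<le> d" using rect_le r1 r2 by auto
  have be: "b \<le> e" unfolding e_def using cd by simp
  have h1: "\<forall>t\<in>{a..b}. h t = g1 t" unfolding h_def by simp
  have h2: "\<forall>t\<in>{b..e}. h t = g2 (t + (c - b))" unfolding h_def using j by (auto simp: algebra_simps)
  have PS1: "PS h a t = PS g1 a t" if "t \<in> {a..b}" for t
    using PS_cong[of a t h g1] h1 that by simp
  have PS2: "PS h b t = PS g2 c (t + (c - b))" if "t \<in> {b..e}" for t
  proof -
    have "PS h b t = PS (\<lambda>t. g2 (t + (c - b))) b t" using PS_cong[of b t h] h2 that by simp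
    also have "\<dots> = PS g2 c (t + (c - b))" using PS_shift[of g2 "c - b" b t] by simp
    finally show ?thesis .
  qed
  have bd1: "bdd_above (PS h a b)" using PS1[of b] ab rect_bdd[OF r1] by simp
  have bd2: "bdd_above (PS h b e)" using PS2[of e] be rect_bdd[OF r2] by (simp add: e_def)
  have bd: "bdd_above (PS h a e)" by (rule bdd_union[OF bd1 bd2 ab be])
  have c1: "continuous_on {a..b} h" using continuous_on_cong[of "{a..b}" "{a..b}" h g1] h1 rect_cont[OF r1] by simp
  have "continuous_on {b..e} (\<lambda>t. g2 (t + (c - b)))"
  proof -
    have "continuous_on {b..e} (\<lambda>t. t + (c - b))" by (intro continuous_intros)
    moreover have "(\<lambda>t. t + (c - b)) ` {b..e} \<subseteq> {c..d}" unfolding e_def by auto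
    ultimately show ?thesis using continuous_on_compose[of "{b..e}" "\<lambda>t. t + (c - b)" g2]
        continuous_on_subset[OF rect_cont[OF r2]] by (simp add: o_def)
  qed
  then have c2: "continuous_on {b..e} h" using continuous_on_cong[of "{b..e}" "{b..e}" h] h2 by simp
  have "continuous_on ({a..b} \<union> {b..e}) h" by (rule continuous_on_closed_Un[OF _ _ c1 c2]) auto
  then have ch: "continuous_on {a..e} h" using ivl_disj_un_two_touch(4)[OF ab be] by simp
  have rh: "rectifiable dist h a e" unfolding rect_def' using ch bd ab be by simp
  define L1 where "L1 = LEN g1 a b"
  define L2 where "L2 = LEN g2 c d"
  have L1: "0 \<le> L1" and L2: "0 \<le> L2" unfolding L1_def L2_def using LEN_ab r1 r2 by auto
  have LEN1: "LEN h a t = LEN g1 a t" if "t \<in> {a..b}" for t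
    unfolding curve_len_def using PS1[OF that] by simp
  have LEN2: "LEN h a t = L1 + LEN g2 c (t + (c - b))" if "t \<in> {b..e}" for t
  proof -
    have "LEN h a t = LEN h a b + LEN h b t"
      using LEN_add[OF bdd_sub(1)[OF bd, of t], of b] that ab be by simp
    moreover have "LEN h b t = LEN g2 c (t + (c - b))" unfolding curve_len_def using PS2[OF that] by simp
    ultimately show ?thesis using LEN1[of b] ab unfolding L1_def by simp
  qed
  have Lh: "LEN h a e = L1 + L2" using LEN2[of e] be unfolding L2_def e_def by simp
  have arc1: "arcp h a e s = arcp g1 a b s" if s: "s \<in> {0..L1}" for s
  proof -
    have "s \<in> {0..LEN g1 a b}" using s unfolding L1_def .
    then obtain t where t: "t \<in> {a..b}" "LEN g1 a t = s" "arcp g1 a b s = g1 t"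
      by (rule arcp_pt[OF r1])
    have "arcp h a e s = h t" using arcp_eq[OF rh, of t s] t LEN1[of t] be by simp
    then show ?thesis using t h1 by simp
  qed
  have arc2: "arcp h a e s = arcp g2 c d (s - L1)" if s: "s \<in> {L1..L1+L2}" for s
  proof -
    have "s - L1 \<in> {0..LEN g2 c d}" using s unfolding L2_def by auto
    then obtain t where t: "t \<in> {c..d}" "LEN g2 c t = s - L1" "arcp g2 c d (s - L1) = g2 t"
      by (rule arcp_pt[OF r2])
    define t' where "t' = t - c + b"
    have t': "t' \<in> {b..e}" using t unfolding t'_def e_def by auto
    have "LEN h a t' = s" using LEN2[OF t'] t unfolding t'_def by simp
    then have "arcp h a e s = h t'" using arcp_eq[OF rh, of t' s] t' ab by simp
    also have "h t' = g2 t" using h2 t' unfolding t'_def by simp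
    finally show ?thesis using t by simp
  qed
  define f where "f = (\<lambda>s. \<rho> (arcp h a e s))"
  have int: "f integrable_on {0..L1+L2}" using LI_integrable[OF rh cr] Lh unfolding f_def by simp
  have "line_integral \<rho> h a e = integral {0..L1} f + integral {L1..L1+L2} f"
    unfolding LI_eq Lh f_def[symmetric]
    using Henstock_Kurzweil_Integration.integral_combine[of 0 L1 "L1+L2" f] L1 L2 int by simp
  moreover have "integral {0..L1} f = line_integral \<rho> g1 a b"
    unfolding LI_eq L1_def[symmetric] f_def using arc1 by (intro integral_cong) auto
  moreover have "integral {L1..L1+L2} f = line_integral \<rho> g2 c d"
  proof -
    have "integral {L1..L1+L2} f = integral {L1..L1+L2} (\<lambda>s. \<rho> (arcp g2 c d (s - L1)))"
      unfolding f_def using arc2 by (intro integral_cong) auto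
    also have "\<dots> = integral {0..L2} (\<lambda>s. \<rho> (arcp g2 c d s))"
      using integral_shift_real_ivl[of 0 "-L1" L2 "\<lambda>s. \<rho> (arcp g2 c d s)"] by (simp add: add.commute)
    finally show ?thesis unfolding LI_eq L2_def by simp
  qed
  moreover have "h a = g1 a" "h e = g2 d" using ab be j unfolding h_def e_def by auto
  ultimately show ?thesis using rh by (intro exI[of _ h] exI[of _ a] exI[of _ e]) simp
qed


lemma exp_has_integral:
  fixes \<alpha> \<beta> L :: real
  assumes "\<beta> \<noteq> 0" "0 \<le> L"
  shows "((\<lambda>s. exp (\<alpha> + \<beta> * s)) has_integral (exp (\<alpha> + \<beta> * L) - exp \<alpha>) / \<beta>) {0..L}"
proof -
  have "((\<lambda>s. exp (\<alpha> + \<beta> * s)) has_integral (exp (\<alpha> + \<beta> * L) / \<beta> - exp (\<alpha> + \<beta> * 0) / \<beta>)) {0..L}"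
  proof (rule fundamental_theorem_of_calculus[OF assms(2)])
    fix x :: real assume "x \<in> {0..L}"
    have "((\<lambda>s. exp (\<alpha> + \<beta> * s) / \<beta>) has_real_derivative (exp (\<alpha> + \<beta> * x) * \<beta>) / \<beta>) (at x within {0..L})"
      by (auto intro!: derivative_eq_intros)
    then show "((\<lambda>s. exp (\<alpha> + \<beta> * s) / \<beta>) has_vector_derivative exp (\<alpha> + \<beta> * x)) (at x within {0..L})"
      using assms(1) by (simp add: has_real_derivative_iff_has_vector_derivative)
  qed
  then show ?thesis by (simp add: diff_divide_distrib)
qed

lemma integral_lower:
  fixes f g :: "real \<Rightarrow> real"
  assumes "(g has_integral I) {0..L}" "f integrable_on {0..L}" "\<And>s. s \<in> {0..L} \<Longrightarrow> g s \<le> f s"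
  shows "I \<le> integral {0..L} f"
  using integral_le[OF has_integral_integrable[OF assms(1)] assms(2) assms(3)] integral_unique[OF assms(1)]
  by simp

lemma integral_upper:
  fixes f g :: "real \<Rightarrow> real"
  assumes "(g has_integral I) {0..L}" "f integrable_on {0..L}" "\<And>s. s \<in> {0..L} \<Longrightarrow> f s \<le> g s"
  shows "integral {0..L} f \<le> I"
  using integral_le[OF assms(2) has_integral_integrable[OF assms(1)] assms(3)] integral_unique[OF assms(1)]
  by simp

context
  fixes \<epsilon> :: real and z0 :: "'a::metric_space"
  assumes eps: "0 < \<epsilon>"
begin

lemma rho_cont: "continuous_on UNIV (rho_eps \<epsilon> z0)"
  unfolding rho_eps_def[abs_def] by (intro continuous_intros)

lemma rho_pos: "0 < rho_eps \<epsilon> z0 x"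
  unfolding rho_eps_def by simp

lemma rho_le1: "rho_eps \<epsilon> z0 x \<le> 1"
  unfolding rho_eps_def using eps by simp

lemma LI_nonneg:
  assumes r: "rectifiable dist g a b"
  shows "0 \<le> line_integral (rho_eps \<epsilon> z0) g a b"
  unfolding LI_eq using LI_integrable[OF r rho_cont] rho_pos by (intro integral_nonneg) (auto intro: less_imp_le)

lemma LI_lower_start:
  assumes r: "rectifiable dist g a b"
  shows "rho_eps \<epsilon> z0 (g a) * (1 - exp (- \<epsilon> * dist (g a) (g b))) / \<epsilon> \<le> line_integral (rho_eps \<epsilon> z0) g a b"
proof -
  define L where "L = LEN g a b"
  define x where "x = g a"
  have L0: "0 \<le> L" unfolding L_def using LEN_ab[OF r] .
  have "dist (g a) (g b) \<le> L" unfolding L_def using dist_le_LEN[OF rect_bdd[OF r] rect_le[OF r]] .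
  then have "rho_eps \<epsilon> z0 x * (1 - exp (- \<epsilon> * dist (g a) (g b))) / \<epsilon> \<le> rho_eps \<epsilon> z0 x * (1 - exp (- \<epsilon> * L)) / \<epsilon>"
    using eps less_imp_le[OF rho_pos] by (intro divide_right_mono mult_left_mono) auto
  also have "\<dots> = (exp (- \<epsilon> * dist x z0 + (-\<epsilon>) * L) - exp (- \<epsilon> * dist x z0)) / (-\<epsilon>)"
    unfolding rho_eps_def using eps by (simp add: field_simps exp_add[symmetric])
  also have "\<dots> \<le> integral {0..L} (\<lambda>s. rho_eps \<epsilon> z0 (arcp g a b s))"
  proof (rule integral_lower[OF exp_has_integral])
    show "- \<epsilon> \<noteq> 0" "0 \<le> L" using eps L0 by auto
    show "(\<lambda>s. rho_eps \<epsilon> z0 (arcp g a b s)) integrable_on {0..L}"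
      using LI_integrable[OF r rho_cont] unfolding L_def .
    fix s assume s: "s \<in> {0..L}"
    have "dist (arcp g a b s) x \<le> s"
      using arcp_lip[OF r, of s 0] s L0 arcp_0[OF r] unfolding L_def x_def by auto
    then have "dist (arcp g a b s) z0 \<le> dist x z0 + s"
      using dist_triangle[of "arcp g a b s" z0 x] by simp
    then have "\<epsilon> * dist (arcp g a b s) z0 \<le> \<epsilon> * (dist x z0 + s)" using eps by (intro mult_left_mono) auto
    then show "exp (- \<epsilon> * dist x z0 + - \<epsilon> * s) \<le> rho_eps \<epsilon> z0 (arcp g a b s)"
      unfolding rho_eps_def by (simp add: algebra_simps)
  qed
  finally show ?thesis unfolding LI_eq L_def x_def .
qed

lemma LI_lower_end:
  assumes r: "rectifiable dist g a b"
  shows "rho_eps \<epsilon> z0 (g b) * (1 - exp (- \<epsilon> * dist (g a) (g b))) / \<epsilon> \<le> line_integral (rho_eps \<epsilon> z0) g a b"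
proof -
  define L where "L = LEN g a b"
  define y where "y = g b"
  have L0: "0 \<le> L" unfolding L_def using LEN_ab[OF r] .
  have "dist (g a) (g b) \<le> L" unfolding L_def using dist_le_LEN[OF rect_bdd[OF r] rect_le[OF r]] .
  then have "rho_eps \<epsilon> z0 y * (1 - exp (- \<epsilon> * dist (g a) (g b))) / \<epsilon> \<le> rho_eps \<epsilon> z0 y * (1 - exp (- \<epsilon> * L)) / \<epsilon>"
    using eps less_imp_le[OF rho_pos] by (intro divide_right_mono mult_left_mono) auto
  also have "\<dots> = (exp (- \<epsilon> * (dist y z0 + L) + \<epsilon> * L) - exp (- \<epsilon> * (dist y z0 + L))) / \<epsilon>"
    unfolding rho_eps_def using eps by (simp add: field_simps exp_add[symmetric] exp_diff)
  also have "\<dots> \<le> integral {0..L} (\<lambda>s. rho_eps \<epsilon> z0 (arcp g a b s))"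
  proof (rule integral_lower[OF exp_has_integral])
    show "\<epsilon> \<noteq> 0" "0 \<le> L" using eps L0 by auto
    show "(\<lambda>s. rho_eps \<epsilon> z0 (arcp g a b s)) integrable_on {0..L}"
      using LI_integrable[OF r rho_cont] unfolding L_def .
    fix s assume s: "s \<in> {0..L}"
    have "dist (arcp g a b s) y \<le> L - s"
      using arcp_lip[OF r, of s L] s L0 arcp_L[OF r] unfolding L_def y_def by auto
    then have "dist (arcp g a b s) z0 \<le> dist y z0 + L - s"
      using dist_triangle[of "arcp g a b s" z0 y] by simp
    then have "\<epsilon> * dist (arcp g a b s) z0 \<le> \<epsilon> * (dist y z0 + L - s)" using eps by (intro mult_left_mono) auto
    then show "exp (- \<epsilon> * (dist y z0 + L) + \<epsilon> * s) \<le> rho_eps \<epsilon> z0 (arcp g a b s)"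
      unfolding rho_eps_def by (simp add: algebra_simps)
  qed
  finally show ?thesis unfolding LI_eq L_def y_def .
qed

lemma LI_const_lower:
  assumes r: "rectifiable dist g a b" and c: "\<And>s. s \<in> {0..LEN g a b} \<Longrightarrow> m \<le> rho_eps \<epsilon> z0 (arcp g a b s)"
  shows "m * LEN g a b \<le> line_integral (rho_eps \<epsilon> z0) g a b"
proof -
  have "((\<lambda>s. m) has_integral m * LEN g a b) {0..LEN g a b}"
    using has_integral_const_real[of m 0 "LEN g a b"] LEN_ab[OF r] by (simp add: content_real mult.commute)
  then show ?thesis unfolding LI_eq using integral_lower LI_integrable[OF r rho_cont] c by blast
qed

lemma geod_curve:
  fixes x y :: 'a
  assumes gs: "geodesic_space TYPE('a)"
  obtains g where "rectifiable dist g 0 (dist x y)" "g 0 = x" "g (dist x y) = y"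
    "line_integral (rho_eps \<epsilon> z0) g 0 (dist x y) = integral {0..dist x y} (\<lambda>s. rho_eps \<epsilon> z0 (g s))"
    "\<And>s. s \<in> {0..dist x y} \<Longrightarrow> dist x (g s) = s"
proof -
  obtain S where "geodesic_seg S x y" using gs unfolding geodesic_space_def by blast
  then obtain g where g: "g 0 = x" "g (dist x y) = y"
    "\<forall>s\<in>{0..dist x y}. \<forall>t\<in>{0..dist x y}. dist (g s) (g t) = \<bar>s - t\<bar>"
    unfolding geodesic_seg_def by blast
  have "dist x (g s) = s" if s: "s \<in> {0..dist x y}" for s
  proof -
    have "dist (g 0) (g s) = \<bar>0 - s\<bar>" using g(3) s by simp
    then show ?thesis using g(1) s by simp
  qed
  moreover have "rectifiable dist g 0 (dist x y)" using isom_curve(1)[OF g(3)] by simp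
  moreover have "line_integral (rho_eps \<epsilon> z0) g 0 (dist x y) = integral {0..dist x y} (\<lambda>s. rho_eps \<epsilon> z0 (g s))"
    using isom_curve(3)[OF g(3)] by simp
  ultimately show ?thesis using that g by blast
qed

abbreviation "DS x y \<equiv> {line_integral (rho_eps \<epsilon> z0) \<gamma> a b | \<gamma> a b.
       rectifiable dist \<gamma> a b \<and> \<gamma> a = x \<and> \<gamma> b = y}"

lemma DE_def': "d_eps \<epsilon> z0 x y = Inf (DS x y)"
  unfolding d_eps_def by simp

lemma DS_mem: "rectifiable dist g a b \<Longrightarrow> g a = x \<Longrightarrow> g b = y \<Longrightarrow> line_integral (rho_eps \<epsilon> z0) g a b \<in> DS x y"
  by blast

lemma DS_E:
  assumes "v \<in> DS x y"
  obtains g a b where "v = line_integral (rho_eps \<epsilon> z0) g a b" "rectifiable dist g a b" "g a = x" "g b = y"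
  using assms by (smt (verit) mem_Collect_eq)

lemma DS_bdd: "bdd_below (DS x y)"
proof (rule bdd_belowI)
  fix v assume "v \<in> DS x y"
  then obtain g a b where "v = line_integral (rho_eps \<epsilon> z0) g a b" "rectifiable dist g a b" by (rule DS_E)
  then show "0 \<le> v" using LI_nonneg by simp
qed

lemma DS_ne: "geodesic_space TYPE('a) \<Longrightarrow> DS x y \<noteq> {}"
proof -
  assume gs: "geodesic_space TYPE('a)"
  obtain g where "rectifiable dist g 0 (dist x y)" "g 0 = x" "g (dist x y) = y"
    using geod_curve[OF gs, of x y] by blast
  then show ?thesis using DS_mem by blast
qed

lemma DE_le:
  assumes "rectifiable dist g a b" "g a = x" "g b = y"
  shows "d_eps \<epsilon> z0 x y \<le> line_integral (rho_eps \<epsilon> z0) g a b"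
  unfolding DE_def' by (rule cInf_lower[OF DS_mem[OF assms] DS_bdd])

lemma DE_ge:
  assumes gs: "geodesic_space TYPE('a)"
    and B: "\<And>g a b. rectifiable dist g a b \<Longrightarrow> g a = x \<Longrightarrow> g b = y \<Longrightarrow> B \<le> line_integral (rho_eps \<epsilon> z0) g a b"
  shows "B \<le> d_eps \<epsilon> z0 x y"
  unfolding DE_def'
proof (rule cInf_greatest[OF DS_ne[OF gs]])
  fix v assume "v \<in> DS x y"
  then obtain g a b where "v = line_integral (rho_eps \<epsilon> z0) g a b" "rectifiable dist g a b" "g a = x" "g b = y"
    by (rule DS_E)
  then show "B \<le> v" using B by simp
qed

lemma DE_lt:
  assumes gs: "geodesic_space TYPE('a)" and lt: "d_eps \<epsilon> z0 x y < r"
  obtains g a b where "rectifiable dist g a b" "g a = x" "g b = y" "line_integral (rho_eps \<epsilon> z0) g a b < r"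
proof -
  have "Inf (DS x y) < r" using lt DE_def' by simp
  then have "\<exists>v\<in>DS x y. v < r" by (rule cInf_lessD[OF DS_ne[OF gs]])
  then obtain v where v: "v \<in> DS x y" "v < r" by (elim bexE)
  from v(1) obtain g a b where "v = line_integral (rho_eps \<epsilon> z0) g a b" "rectifiable dist g a b" "g a = x" "g b = y"
    by (rule DS_E)
  then show ?thesis using that v(2) by simp
qed

lemma DE_nonneg: "geodesic_space TYPE('a) \<Longrightarrow> 0 \<le> d_eps \<epsilon> z0 x y"
  by (rule DE_ge) (auto intro: LI_nonneg)

lemma DE_tri:
  assumes gs: "geodesic_space TYPE('a)"
  shows "d_eps \<epsilon> z0 x z \<le> d_eps \<epsilon> z0 x y + d_eps \<epsilon> z0 y z"
proof (rule field_le_epsilon)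
  fix e :: real assume e: "0 < e"
  have l1: "d_eps \<epsilon> z0 x y < d_eps \<epsilon> z0 x y + e/2" using e by simp
  obtain g1 a1 b1 where g1: "rectifiable dist g1 a1 b1" "g1 a1 = x" "g1 b1 = y"
    "line_integral (rho_eps \<epsilon> z0) g1 a1 b1 < d_eps \<epsilon> z0 x y + e/2"
    by (rule DE_lt[OF gs l1])
  have l2: "d_eps \<epsilon> z0 y z < d_eps \<epsilon> z0 y z + e/2" using e by simp
  obtain g2 a2 b2 where g2: "rectifiable dist g2 a2 b2" "g2 a2 = y" "g2 b2 = z"
    "line_integral (rho_eps \<epsilon> z0) g2 a2 b2 < d_eps \<epsilon> z0 y z + e/2"
    by (rule DE_lt[OF gs l2])
  obtain g a b where g: "rectifiable dist g a b" "g a = x" "g b = z"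
    "line_integral (rho_eps \<epsilon> z0) g a b = line_integral (rho_eps \<epsilon> z0) g1 a1 b1 + line_integral (rho_eps \<epsilon> z0) g2 a2 b2"
    using concat_curve[OF g1(1) g2(1) _ rho_cont] g1(2,3) g2(2,3) by auto
  have "d_eps \<epsilon> z0 x z \<le> line_integral (rho_eps \<epsilon> z0) g a b" using DE_le[OF g(1-3)] .
  then show "d_eps \<epsilon> z0 x z \<le> d_eps \<epsilon> z0 x y + d_eps \<epsilon> z0 y z + e" using g g1 g2 by simp
qed

lemma DE_lower_start:
  assumes gs: "geodesic_space TYPE('a)"
  shows "rho_eps \<epsilon> z0 x * (1 - exp (- \<epsilon> * dist x y)) / \<epsilon> \<le> d_eps \<epsilon> z0 x y"
  by (rule DE_ge[OF gs]) (drule LI_lower_start, simp)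

lemma DE_lower_end:
  assumes gs: "geodesic_space TYPE('a)"
  shows "rho_eps \<epsilon> z0 y * (1 - exp (- \<epsilon> * dist x y)) / \<epsilon> \<le> d_eps \<epsilon> z0 x y"
  by (rule DE_ge[OF gs]) (drule LI_lower_end, simp)

lemma DE_upper_dist:
  assumes gs: "geodesic_space TYPE('a)"
  shows "d_eps \<epsilon> z0 x y \<le> dist x y"
proof -
  obtain g where g: "rectifiable dist g 0 (dist x y)" "g 0 = x" "g (dist x y) = y"
    "line_integral (rho_eps \<epsilon> z0) g 0 (dist x y) = integral {0..dist x y} (\<lambda>s. rho_eps \<epsilon> z0 (g s))"
    using geod_curve[OF gs, of x y] by blast
  have "integral {0..dist x y} (\<lambda>s. rho_eps \<epsilon> z0 (g s)) \<le> dist x y"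
  proof (rule integral_upper)
    show "((\<lambda>s. 1) has_integral dist x y) {0..dist x y}" using has_integral_const_real[of "1::real" 0 "dist x y"] by (simp add: content_real)
    show "(\<lambda>s. rho_eps \<epsilon> z0 (g s)) integrable_on {0..dist x y}"
    proof -
      have "continuous_on {0..dist x y} g" using rect_cont[OF g(1)] .
      then have "continuous_on {0..dist x y} (\<lambda>s. rho_eps \<epsilon> z0 (g s))"
        using continuous_on_compose[of "{0..dist x y}" g "rho_eps \<epsilon> z0"] rho_cont
        by (simp add: o_def continuous_on_subset)
      then show ?thesis by (rule integrable_continuous_real)
    qed
  qed (rule rho_le1)
  then show ?thesis using DE_le[OF g(1-3)] g(4) by simp
qed

end


context
  fixes \<epsilon> :: real and z0 :: "'a::metric_space"
  assumes eps: "0 < \<epsilon>" and gs: "geodesic_space TYPE('a)"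
begin

lemma DE_upper_exp:
  "d_eps \<epsilon> z0 x y \<le> rho_eps \<epsilon> z0 x * (exp (\<epsilon> * dist x y) - 1) / \<epsilon>"
proof -
  obtain g where g: "rectifiable dist g 0 (dist x y)" "g 0 = x" "g (dist x y) = y"
    "line_integral (rho_eps \<epsilon> z0) g 0 (dist x y) = integral {0..dist x y} (\<lambda>s. rho_eps \<epsilon> z0 (g s))"
    "\<And>s. s \<in> {0..dist x y} \<Longrightarrow> dist x (g s) = s"
    using geod_curve[OF eps gs, of x y] by blast
  have "integral {0..dist x y} (\<lambda>s. rho_eps \<epsilon> z0 (g s)) \<le> (exp (- \<epsilon> * dist x z0 + \<epsilon> * dist x y) - exp (- \<epsilon> * dist x z0)) / \<epsilon>"
  proof (rule integral_upper[OF exp_has_integral])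
    show "\<epsilon> \<noteq> 0" "0 \<le> dist x y" using eps by auto
    show "(\<lambda>s. rho_eps \<epsilon> z0 (g s)) integrable_on {0..dist x y}"
    proof -
      have "continuous_on {0..dist x y} (\<lambda>s. rho_eps \<epsilon> z0 (g s))"
        using continuous_on_compose[OF rect_cont[OF g(1)] continuous_on_subset[OF rho_cont[OF eps, of z0] subset_UNIV]]
        by (simp add: o_def)
      then show ?thesis by (rule integrable_continuous_real)
    qed
    fix s assume s: "s \<in> {0..dist x y}"
    have "dist x z0 \<le> dist x (g s) + dist (g s) z0" by (rule dist_triangle)
    then have "dist x z0 - s \<le> dist (g s) z0" using g(5)[OF s] by simp
    then have "\<epsilon> * (dist x z0 - s) \<le> \<epsilon> * dist (g s) z0" using eps by (intro mult_left_mono) auto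
    then show "rho_eps \<epsilon> z0 (g s) \<le> exp (- \<epsilon> * dist x z0 + \<epsilon> * s)"
      unfolding rho_eps_def by (simp add: algebra_simps)
  qed
  also have "\<dots> = rho_eps \<epsilon> z0 x * (exp (\<epsilon> * dist x y) - 1) / \<epsilon>"
    unfolding rho_eps_def by (simp add: exp_add[symmetric] exp_diff algebra_simps)
  finally show ?thesis using DE_le[OF eps g(1-3), of z0] g(4) by simp
qed

lemma ray_dist0: "geodesic_ray \<gamma> z0 \<Longrightarrow> 0 \<le> t \<Longrightarrow> dist (\<gamma> t) z0 = t"
  unfolding geodesic_ray_def by (metis abs_of_nonneg diff_zero order_refl)

lemma ray_rho: "geodesic_ray \<gamma> z0 \<Longrightarrow> 0 \<le> t \<Longrightarrow> rho_eps \<epsilon> z0 (\<gamma> t) = exp (- \<epsilon> * t)"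
  unfolding rho_eps_def using ray_dist0 by simp

lemma ray_fwd:
  assumes ray: "geodesic_ray \<gamma> z0" and t: "0 \<le> t1" "t1 \<le> t2"
  shows "d_eps \<epsilon> z0 (\<gamma> t1) (\<gamma> t2) \<le> exp (- \<epsilon> * t1) / \<epsilon>"
proof -
  have iso: "\<forall>s\<in>{t1..t2}. \<forall>t\<in>{t1..t2}. dist (\<gamma> s) (\<gamma> t) = \<bar>s - t\<bar>"
    using ray t unfolding geodesic_ray_def by auto
  have "line_integral (rho_eps \<epsilon> z0) \<gamma> t1 t2 = integral {0..t2 - t1} (\<lambda>s. rho_eps \<epsilon> z0 (\<gamma> (t1 + s)))"
    by (rule isom_curve(3)[OF iso t(2)])
  also have "\<dots> = integral {0..t2 - t1} (\<lambda>s. exp (- \<epsilon> * t1 + (- \<epsilon>) * s))"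
    using ray_rho[OF ray] t by (intro integral_cong) (auto simp: algebra_simps)
  also have "\<dots> = (exp (- \<epsilon> * t1 + (- \<epsilon>) * (t2 - t1)) - exp (- \<epsilon> * t1)) / (- \<epsilon>)"
    using exp_has_integral[of "-\<epsilon>" "t2 - t1" "- \<epsilon> * t1"] eps t by (intro integral_unique) auto
  also have "\<dots> \<le> exp (- \<epsilon> * t1) / \<epsilon>"
    using eps by (simp add: divide_simps)
  finally show ?thesis using DE_le[OF eps isom_curve(1)[OF iso t(2)] refl refl, of z0] by simp
qed

lemma ray_bwd:
  assumes ray: "geodesic_ray \<gamma> z0" and t: "0 \<le> t1" "t1 \<le> t2"
  shows "d_eps \<epsilon> z0 (\<gamma> t2) (\<gamma> t1) \<le> exp (- \<epsilon> * t1) / \<epsilon>"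
proof -
  define h where "h = (\<lambda>t. \<gamma> (- t))"
  have iso: "\<forall>s\<in>{-t2..-t1}. \<forall>t\<in>{-t2..-t1}. dist (h s) (h t) = \<bar>s - t\<bar>"
    using ray t unfolding geodesic_ray_def h_def by (auto simp: abs_minus_commute)
  have tt: "- t2 \<le> - t1" using t by simp
  have "line_integral (rho_eps \<epsilon> z0) h (-t2) (-t1) = integral {0..t2 - t1} (\<lambda>s. rho_eps \<epsilon> z0 (h (- t2 + s)))"
    using isom_curve(3)[OF iso tt] by simp
  also have "\<dots> = integral {0..t2 - t1} (\<lambda>s. exp (- \<epsilon> * t2 + \<epsilon> * s))"
    using ray_rho[OF ray] t unfolding h_def by (intro integral_cong) (auto simp: algebra_simps)
  also have "\<dots> = (exp (- \<epsilon> * t2 + \<epsilon> * (t2 - t1)) - exp (- \<epsilon> * t2)) / \<epsilon>"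
    using exp_has_integral[of "\<epsilon>" "t2 - t1" "- \<epsilon> * t2"] eps t by (intro integral_unique) auto
  also have "\<dots> \<le> exp (- \<epsilon> * t1) / \<epsilon>"
    using eps by (simp add: divide_simps algebra_simps)
  finally show ?thesis using DE_le[OF eps isom_curve(1)[OF iso tt] refl refl, of z0] unfolding h_def by simp
qed

lemma ray_both:
  assumes ray: "geodesic_ray \<gamma> z0" and t: "0 \<le> t1" "0 \<le> t2"
  shows "d_eps \<epsilon> z0 (\<gamma> t1) (\<gamma> t2) \<le> exp (- \<epsilon> * min t1 t2) / \<epsilon>"
proof (cases "t1 \<le> t2")
  case True then show ?thesis using ray_fwd[OF ray t(1) True] by simp
next
  case False then show ?thesis using ray_bwd[OF ray t(2), of t1] by simp
qed

lemma lim_conv: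
  assumes c: "cauchy_wrt (d_eps \<epsilon> z0) s"
  shows "convergent (\<lambda>n. d_eps \<epsilon> z0 x (s n))"
proof -
  have "Cauchy (\<lambda>n. d_eps \<epsilon> z0 x (s n))"
    unfolding Cauchy_def
  proof (intro allI impI)
    fix e :: real assume e: "0 < e"
    then obtain N where N: "\<forall>m\<ge>N. \<forall>n\<ge>N. d_eps \<epsilon> z0 (s m) (s n) < e"
      using c unfolding cauchy_wrt_def by blast
    show "\<exists>M. \<forall>m\<ge>M. \<forall>n\<ge>M. dist (d_eps \<epsilon> z0 x (s m)) (d_eps \<epsilon> z0 x (s n)) < e"
    proof (intro exI allI impI)
      fix m n assume mn: "N \<le> m" "N \<le> n"
      have "d_eps \<epsilon> z0 x (s m) \<le> d_eps \<epsilon> z0 x (s n) + d_eps \<epsilon> z0 (s n) (s m)" by (rule DE_tri[OF eps gs])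
      moreover have "d_eps \<epsilon> z0 x (s n) \<le> d_eps \<epsilon> z0 x (s m) + d_eps \<epsilon> z0 (s m) (s n)" by (rule DE_tri[OF eps gs])
      moreover have "d_eps \<epsilon> z0 (s n) (s m) < e" "d_eps \<epsilon> z0 (s m) (s n) < e" using N mn by auto
      ultimately show "dist (d_eps \<epsilon> z0 x (s m)) (d_eps \<epsilon> z0 x (s n)) < e"
        unfolding dist_real_def by linarith
    qed
  qed
  then show ?thesis by (simp add: Cauchy_convergent_iff)
qed

end


context
  fixes \<epsilon> :: real and z0 :: "'a::metric_space"
  assumes eps: "0 < \<epsilon>" and gs: "geodesic_space TYPE('a)"
begin

abbreviation "BD x \<equiv> {lim (\<lambda>n. d_eps \<epsilon> z0 x (s n)) | s. cauchy_wrt (d_eps \<epsilon> z0) s \<and>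
       \<not> (\<exists>z. (\<lambda>n. d_eps \<epsilon> z0 (s n) z) \<longlonglongrightarrow> 0)}"

lemma dbd_def': "d_bd (d_eps \<epsilon> z0) x = Inf (BD x)"
  unfolding d_bd_def by simp

lemma BD_mem: "cauchy_wrt (d_eps \<epsilon> z0) s \<Longrightarrow> \<not> (\<exists>z. (\<lambda>n. d_eps \<epsilon> z0 (s n) z) \<longlonglongrightarrow> 0) \<Longrightarrow>
  lim (\<lambda>n. d_eps \<epsilon> z0 x (s n)) \<in> BD x"
  by blast

lemma BD_E:
  assumes "v \<in> BD x"
  obtains s where "v = lim (\<lambda>n. d_eps \<epsilon> z0 x (s n))" "cauchy_wrt (d_eps \<epsilon> z0) s"
    "\<not> (\<exists>z. (\<lambda>n. d_eps \<epsilon> z0 (s n) z) \<longlonglongrightarrow> 0)"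
  using assms by (smt (verit) mem_Collect_eq)

lemma lim_tends: "cauchy_wrt (d_eps \<epsilon> z0) s \<Longrightarrow> (\<lambda>n. d_eps \<epsilon> z0 x (s n)) \<longlonglongrightarrow> lim (\<lambda>n. d_eps \<epsilon> z0 x (s n))"
  using lim_conv[OF eps gs] by (simp add: convergent_LIMSEQ_iff)

lemma lim_nonneg: "cauchy_wrt (d_eps \<epsilon> z0) s \<Longrightarrow> 0 \<le> lim (\<lambda>n. d_eps \<epsilon> z0 x (s n))"
  by (rule LIMSEQ_le_const[OF lim_tends]) (use DE_nonneg[OF eps gs] in auto)

lemma BD_bdd: "bdd_below (BD x)"
proof (rule bdd_belowI)
  fix v assume "v \<in> BD x"
  then obtain s where "v = lim (\<lambda>n. d_eps \<epsilon> z0 x (s n))" "cauchy_wrt (d_eps \<epsilon> z0) s" by (rule BD_E)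
  then show "0 \<le> v" using lim_nonneg by simp
qed

lemma exp_small:
  assumes "0 < e"
  obtains N :: nat where "exp (- \<epsilon> * real N) / \<epsilon> < e"
proof -
  obtain N :: nat where N: "- ln (\<epsilon> * e) / \<epsilon> < real N" using reals_Archimedean2 by blast
  then have "- ln (\<epsilon> * e) < \<epsilon> * real N" using eps by (simp add: field_simps)
  then have "- \<epsilon> * real N < ln (\<epsilon> * e)" by simp
  then have "exp (- \<epsilon> * real N) < \<epsilon> * e" using eps assms
    by (metis exp_less_cancel_iff exp_ln mult_pos_pos)
  then show ?thesis using that eps by (simp add: field_simps)
qed

lemma ray_seq:
  assumes ray: "geodesic_ray \<gamma> z0" and t0: "0 \<le> t0"
  defines "s \<equiv> (\<lambda>n::nat. \<gamma> (t0 + real n))"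
  shows "cauchy_wrt (d_eps \<epsilon> z0) s" "\<not> (\<exists>z. (\<lambda>n. d_eps \<epsilon> z0 (s n) z) \<longlonglongrightarrow> 0)"
    "lim (\<lambda>n. d_eps \<epsilon> z0 x (s n)) \<le> d_eps \<epsilon> z0 x (\<gamma> t0) + exp (- \<epsilon> * t0) / \<epsilon>"
proof -
  show c: "cauchy_wrt (d_eps \<epsilon> z0) s"
    unfolding cauchy_wrt_def
  proof (intro allI impI)
    fix e :: real assume e: "0 < e"
    obtain N :: nat where N: "exp (- \<epsilon> * real N) / \<epsilon> < e" using exp_small[OF e] .
    show "\<exists>N. \<forall>m\<ge>N. \<forall>n\<ge>N. d_eps \<epsilon> z0 (s m) (s n) < e"
    proof (intro exI allI impI)
      fix m n assume mn: "N \<le> m" "N \<le> n"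
      have "d_eps \<epsilon> z0 (s m) (s n) \<le> exp (- \<epsilon> * min (t0 + real m) (t0 + real n)) / \<epsilon>"
        unfolding s_def using ray_both[OF eps gs ray] t0 by simp
      also have "\<dots> \<le> exp (- \<epsilon> * real N) / \<epsilon>"
        using eps mn t0 by (intro divide_right_mono) (auto simp: min_def)
      finally show "d_eps \<epsilon> z0 (s m) (s n) < e" using N by simp
    qed
  qed
  show "\<not> (\<exists>z. (\<lambda>n. d_eps \<epsilon> z0 (s n) z) \<longlonglongrightarrow> 0)"
  proof
    assume "\<exists>z. (\<lambda>n. d_eps \<epsilon> z0 (s n) z) \<longlonglongrightarrow> 0"
    then obtain z where z: "(\<lambda>n. d_eps \<epsilon> z0 (s n) z) \<longlonglongrightarrow> 0" by blast
    define c where "c = rho_eps \<epsilon> z0 z * (1 - exp (- \<epsilon>)) / \<epsilon>"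
    have "exp (- \<epsilon>) < 1" using eps by simp
    then have c0: "0 < c" unfolding c_def using eps rho_pos[OF eps, of z0 z] by simp
    have "eventually (\<lambda>n. d_eps \<epsilon> z0 (s n) z < c) sequentially"
      using order_tendstoD(2)[OF z c0] .
    then obtain N1 where N1: "\<And>n. n \<ge> N1 \<Longrightarrow> d_eps \<epsilon> z0 (s n) z < c"
      unfolding eventually_sequentially by blast
    obtain N0 :: nat where N0: "dist z z0 + 1 < real N0" using reals_Archimedean2 by blast
    define n where "n = max N0 N1"
    have "dist (s n) z0 = t0 + real n" unfolding s_def using ray_dist0[OF eps gs ray] t0 by simp
    moreover have "dist (s n) z0 \<le> dist (s n) z + dist z z0" by (rule dist_triangle)
    moreover have "real N0 \<le> real n" unfolding n_def by simp
    ultimately have d1: "1 \<le> dist (s n) z" using N0 t0 by simp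
    have "c \<le> rho_eps \<epsilon> z0 z * (1 - exp (- \<epsilon> * dist (s n) z)) / \<epsilon>"
      unfolding c_def using eps d1 less_imp_le[OF rho_pos[OF eps]]
      by (intro divide_right_mono mult_left_mono) auto
    also have "\<dots> \<le> d_eps \<epsilon> z0 (s n) z" by (rule DE_lower_end[OF eps gs])
    finally show False using N1[of n] unfolding n_def by simp
  qed
  show "lim (\<lambda>n. d_eps \<epsilon> z0 x (s n)) \<le> d_eps \<epsilon> z0 x (\<gamma> t0) + exp (- \<epsilon> * t0) / \<epsilon>"
  proof (rule LIMSEQ_le_const2[OF lim_tends[OF c]])
    show "\<exists>N. \<forall>n\<ge>N. d_eps \<epsilon> z0 x (s n) \<le> d_eps \<epsilon> z0 x (\<gamma> t0) + exp (- \<epsilon> * t0) / \<epsilon>"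
    proof (intro exI allI impI)
      fix n :: nat
      have "d_eps \<epsilon> z0 x (s n) \<le> d_eps \<epsilon> z0 x (\<gamma> t0) + d_eps \<epsilon> z0 (\<gamma> t0) (s n)"
        by (rule DE_tri[OF eps gs])
      moreover have "d_eps \<epsilon> z0 (\<gamma> t0) (s n) \<le> exp (- \<epsilon> * t0) / \<epsilon>"
        unfolding s_def using ray_fwd[OF eps gs ray t0] by simp
      ultimately show "d_eps \<epsilon> z0 x (s n) \<le> d_eps \<epsilon> z0 x (\<gamma> t0) + exp (- \<epsilon> * t0) / \<epsilon>" by simp
    qed
  qed
qed

lemma BD_ne:
  assumes rs: "roughly_starlike z0 M"
  shows "BD x \<noteq> {}"
proof -
  obtain \<gamma> where "geodesic_ray \<gamma> z0" using rs unfolding roughly_starlike_def by blast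
  then show ?thesis using ray_seq[of \<gamma> 0] BD_mem by blast
qed

end


context
  fixes \<epsilon> :: real and z0 :: "'a::metric_space" and M :: real
  assumes eps: "0 < \<epsilon>" and gs: "geodesic_space TYPE('a)" and cpl: "complete (UNIV :: 'a set)"
    and rs: "roughly_starlike z0 M"
begin

lemma dbd_upper_eta:
  assumes eta: "0 < \<eta>"
  shows "d_bd (d_eps \<epsilon> z0) x \<le> rho_eps \<epsilon> z0 x * (2 * exp (\<epsilon> * (M + \<eta>)) - 1) / \<epsilon>"
proof -
  obtain \<gamma> where ray: "geodesic_ray \<gamma> z0" and inf: "infdist x (\<gamma> ` {0..}) \<le> M"
    using rs unfolding roughly_starlike_def by blast
  have ne: "\<gamma> ` {0..} \<noteq> {}" by auto
  have "Inf (dist x ` \<gamma> ` {0..}) < M + \<eta>" using inf ne eta unfolding infdist_def by simp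
  then have "\<exists>v\<in>dist x ` \<gamma> ` {0..}. v < M + \<eta>" by (rule cInf_lessD[rotated]) (use ne in simp)
  then obtain t0 where t0: "0 \<le> t0" "dist x (\<gamma> t0) < M + \<eta>" by auto
  define w where "w = \<gamma> t0"
  define D where "D = dist x w"
  have "d_bd (d_eps \<epsilon> z0) x \<le> lim (\<lambda>n. d_eps \<epsilon> z0 x (\<gamma> (t0 + real n)))"
    unfolding dbd_def'[OF eps gs]
    by (rule cInf_lower[OF BD_mem[OF eps gs] BD_bdd[OF eps gs]]) (use ray_seq[OF eps gs ray t0(1)] in auto)
  also have "\<dots> \<le> d_eps \<epsilon> z0 x w + exp (- \<epsilon> * t0) / \<epsilon>"
    unfolding w_def using ray_seq(3)[OF eps gs ray t0(1)] by simp
  also have "\<dots> \<le> rho_eps \<epsilon> z0 x * (exp (\<epsilon> * D) - 1) / \<epsilon> + rho_eps \<epsilon> z0 x * exp (\<epsilon> * D) / \<epsilon>"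
  proof -
    have "d_eps \<epsilon> z0 x w \<le> rho_eps \<epsilon> z0 x * (exp (\<epsilon> * D) - 1) / \<epsilon>"
      unfolding D_def by (rule DE_upper_exp[OF eps gs])
    moreover have "exp (- \<epsilon> * t0) \<le> rho_eps \<epsilon> z0 x * exp (\<epsilon> * D)"
    proof -
      have "dist w z0 = t0" unfolding w_def using ray_dist0[OF eps gs ray t0(1)] .
      moreover have "dist x z0 \<le> dist x w + dist w z0" by (rule dist_triangle)
      ultimately have "\<epsilon> * (dist x z0 - D) \<le> \<epsilon> * t0" unfolding D_def using eps by (intro mult_left_mono) auto
      then show ?thesis unfolding rho_eps_def by (simp add: exp_add[symmetric] algebra_simps)
    qed
    ultimately show ?thesis using eps by (simp add: divide_right_mono add_mono)
  qed
  also have "\<dots> = rho_eps \<epsilon> z0 x * (2 * exp (\<epsilon> * D) - 1) / \<epsilon>" using eps by (simp add: field_simps)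
  also have "\<dots> \<le> rho_eps \<epsilon> z0 x * (2 * exp (\<epsilon> * (M + \<eta>)) - 1) / \<epsilon>"
    using t0 eps less_imp_le[OF rho_pos[OF eps]] unfolding D_def w_def
    by (intro divide_right_mono mult_left_mono) auto
  finally show ?thesis .
qed

lemma dbd_upper:
  "d_bd (d_eps \<epsilon> z0) x \<le> rho_eps \<epsilon> z0 x * (2 * exp (\<epsilon> * M) - 1) / \<epsilon>"
proof (rule tendsto_le[OF trivial_limit_at_right_real])
  have "((\<lambda>\<eta>. rho_eps \<epsilon> z0 x * (2 * exp (\<epsilon> * (M + \<eta>)) - 1) / \<epsilon>) \<longlongrightarrow>
      rho_eps \<epsilon> z0 x * (2 * exp (\<epsilon> * (M + 0)) - 1) / \<epsilon>) (at_right 0)"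
    using eps by (intro tendsto_intros) auto
  then show "((\<lambda>\<eta>. rho_eps \<epsilon> z0 x * (2 * exp (\<epsilon> * (M + \<eta>)) - 1) / \<epsilon>) \<longlongrightarrow>
      rho_eps \<epsilon> z0 x * (2 * exp (\<epsilon> * M) - 1) / \<epsilon>) (at_right 0)" by simp
  show "((\<lambda>\<eta>. d_bd (d_eps \<epsilon> z0) x) \<longlongrightarrow> d_bd (d_eps \<epsilon> z0) x) (at_right 0)" by simp
  show "\<forall>\<^sub>F \<eta> in at_right 0. d_bd (d_eps \<epsilon> z0) x \<le> rho_eps \<epsilon> z0 x * (2 * exp (\<epsilon> * (M + \<eta>)) - 1) / \<epsilon>"
    using eventually_at_right_less[of "0::real"] by eventually_elim (rule dbd_upper_eta)
qed

lemma dbd_lower: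
  "rho_eps \<epsilon> z0 x / \<epsilon> \<le> d_bd (d_eps \<epsilon> z0) x"
  unfolding dbd_def'[OF eps gs]
proof (rule cInf_greatest[OF BD_ne[OF eps gs rs]])
  fix v assume "v \<in> BD \<epsilon> z0 x"
  then obtain s where v: "v = lim (\<lambda>n. d_eps \<epsilon> z0 x (s n))" and c: "cauchy_wrt (d_eps \<epsilon> z0) s"
    and nc: "\<not> (\<exists>z. (\<lambda>n. d_eps \<epsilon> z0 (s n) z) \<longlonglongrightarrow> 0)" by (rule BD_E[OF eps gs])
  show "rho_eps \<epsilon> z0 x / \<epsilon> \<le> v"
  proof (rule ccontr)
    assume "\<not> ?thesis"
    then have vlt: "v < rho_eps \<epsilon> z0 x / \<epsilon>" by simp
    define \<rho>x where "\<rho>x = rho_eps \<epsilon> z0 x"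
    have \<rho>x: "0 < \<rho>x" unfolding \<rho>x_def using rho_pos[OF eps] .
    define c where "c = (v + \<rho>x / \<epsilon>) / 2"
    have v0: "0 \<le> v" unfolding v using lim_nonneg[OF eps gs c] .
    have cv: "v < c" "c < \<rho>x / \<epsilon>" unfolding c_def using vlt \<rho>x_def by (auto simp: field_simps)
    define q where "q = 1 - \<epsilon> * c / \<rho>x"
    have q0: "0 < q" unfolding q_def using cv \<rho>x eps by (simp add: field_simps)
    define R where "R = - ln q / \<epsilon>"
    have "eventually (\<lambda>n. d_eps \<epsilon> z0 x (s n) < c) sequentially"
      using order_tendstoD(2)[OF lim_tends[OF eps gs c] ] cv v by simp
    then obtain N0 where N0: "\<And>n. n \<ge> N0 \<Longrightarrow> d_eps \<epsilon> z0 x (s n) < c"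
      unfolding eventually_sequentially by blast
    define c0 where "c0 = exp (- \<epsilon> * (R + dist x z0))"
    have c00: "0 < c0" unfolding c0_def by simp
    have rho_sn: "c0 \<le> rho_eps \<epsilon> z0 (s n)" if n: "n \<ge> N0" for n
    proof -
      have "\<rho>x * (1 - exp (- \<epsilon> * dist x (s n))) / \<epsilon> < c"
        using DE_lower_start[OF eps gs, of z0 x "s n"] N0[OF n] unfolding \<rho>x_def by simp
      then have "\<rho>x * (1 - exp (- \<epsilon> * dist x (s n))) < \<epsilon> * c" using eps by (simp add: field_simps)
      then have "1 - exp (- \<epsilon> * dist x (s n)) < \<epsilon> * c / \<rho>x" using \<rho>x by (simp add: field_simps)
      then have "q < exp (- \<epsilon> * dist x (s n))" unfolding q_def by simp
      then have "ln q < - \<epsilon> * dist x (s n)" using q0 by (metis ln_exp ln_less_cancel_iff exp_gt_zero)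
      then have "dist x (s n) < R" unfolding R_def using eps by (simp add: field_simps)
      moreover have "dist (s n) z0 \<le> dist (s n) x + dist x z0" by (rule dist_triangle)
      ultimately have "\<epsilon> * dist (s n) z0 \<le> \<epsilon> * (R + dist x z0)" using eps
        by (intro mult_left_mono) (auto simp: dist_commute)
      then show ?thesis unfolding c0_def rho_eps_def by simp
    qed
    have "Cauchy s"
      unfolding Cauchy_def
    proof (intro allI impI)
      fix e :: real assume e: "0 < e"
      define e' where "e' = c0 * (1 - exp (- \<epsilon> * e)) / \<epsilon>"
      have "exp (- \<epsilon> * e) < 1" using eps e by simp
      then have e': "0 < e'" unfolding e'_def using c00 eps by simp
      then obtain N1 where N1: "\<forall>m\<ge>N1. \<forall>n\<ge>N1. d_eps \<epsilon> z0 (s m) (s n) < e'"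
        using c unfolding cauchy_wrt_def by blast
      show "\<exists>N. \<forall>m\<ge>N. \<forall>n\<ge>N. dist (s m) (s n) < e"
      proof (intro exI[of _ "max N0 N1"] allI impI)
        fix m n assume mn: "max N0 N1 \<le> m" "max N0 N1 \<le> n"
        define d where "d = dist (s m) (s n)"
        have "0 \<le> 1 - exp (- \<epsilon> * d)" unfolding d_def using eps by simp
        then have "c0 * (1 - exp (- \<epsilon> * d)) / \<epsilon> \<le> rho_eps \<epsilon> z0 (s m) * (1 - exp (- \<epsilon> * d)) / \<epsilon>"
          using rho_sn[of m] mn eps by (intro divide_right_mono mult_right_mono) auto
        also have "\<dots> \<le> d_eps \<epsilon> z0 (s m) (s n)" unfolding d_def by (rule DE_lower_start[OF eps gs])
        also have "\<dots> < e'" using N1 mn by auto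
        finally have "c0 * (1 - exp (- \<epsilon> * d)) < c0 * (1 - exp (- \<epsilon> * e))"
          unfolding e'_def using eps by (simp add: divide_strict_right_mono_neg field_simps)
        then have "exp (- \<epsilon> * e) < exp (- \<epsilon> * d)" using c00 by simp
        then have "\<epsilon> * d < \<epsilon> * e" by simp
        then show "dist (s m) (s n) < e" unfolding d_def using eps by simp
      qed
    qed
    then obtain z where z: "s \<longlonglongrightarrow> z" using cpl unfolding complete_def by blast
    have "(\<lambda>n. d_eps \<epsilon> z0 (s n) z) \<longlonglongrightarrow> 0"
    proof (rule tendsto_sandwich[of "\<lambda>n. 0" _ _ "\<lambda>n. dist (s n) z"])
      show "\<forall>\<^sub>F n in sequentially. 0 \<le> d_eps \<epsilon> z0 (s n) z" using DE_nonneg[OF eps gs] by simp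
      show "\<forall>\<^sub>F n in sequentially. d_eps \<epsilon> z0 (s n) z \<le> dist (s n) z" using DE_upper_dist[OF eps gs] by simp
      show "(\<lambda>n. 0::real) \<longlonglongrightarrow> 0" by simp
      show "(\<lambda>n. dist (s n) z) \<longlonglongrightarrow> 0" using tendsto_dist[OF z tendsto_const[of z]] by simp
    qed
    then show False using nc by blast
  qed
qed

lemma dbd_lip:
  "d_bd (d_eps \<epsilon> z0) x - d_eps \<epsilon> z0 x z \<le> d_bd (d_eps \<epsilon> z0) z"
  unfolding dbd_def'[OF eps gs, of z0 z]
proof (rule cInf_greatest[OF BD_ne[OF eps gs rs]])
  fix v assume "v \<in> BD \<epsilon> z0 z"
  then obtain s where v: "v = lim (\<lambda>n. d_eps \<epsilon> z0 z (s n))" and c: "cauchy_wrt (d_eps \<epsilon> z0) s"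
    and nc: "\<not> (\<exists>y. (\<lambda>n. d_eps \<epsilon> z0 (s n) y) \<longlonglongrightarrow> 0)" by (rule BD_E[OF eps gs])
  have "d_bd (d_eps \<epsilon> z0) x \<le> lim (\<lambda>n. d_eps \<epsilon> z0 x (s n))"
    unfolding dbd_def'[OF eps gs] by (rule cInf_lower[OF BD_mem[OF eps gs c nc] BD_bdd[OF eps gs]])
  also have "\<dots> \<le> d_eps \<epsilon> z0 x z + v"
  proof (rule LIMSEQ_le[OF lim_tends[OF eps gs c]])
    show "(\<lambda>n. d_eps \<epsilon> z0 x z + d_eps \<epsilon> z0 z (s n)) \<longlonglongrightarrow> d_eps \<epsilon> z0 x z + v"
      unfolding v by (intro tendsto_intros lim_tends[OF eps gs c])
    show "\<exists>N. \<forall>n\<ge>N. d_eps \<epsilon> z0 x (s n) \<le> d_eps \<epsilon> z0 x z + d_eps \<epsilon> z0 z (s n)"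
      using DE_tri[OF eps gs] by blast
  qed
  finally show "d_bd (d_eps \<epsilon> z0) x - d_eps \<epsilon> z0 x z \<le> v" by simp
qed

end


lemma exp_minus_one_le: "0 \<le> u \<Longrightarrow> exp u - 1 \<le> u * exp (u::real)"
proof -
  assume u: "0 \<le> u"
  have "1 + (- u) \<le> exp (- u)" by (rule exp_ge_add_one_self)
  then have "(1 - u) * exp u \<le> exp (- u) * exp u" by (intro mult_right_mono) auto
  then show ?thesis by (simp add: exp_minus algebra_simps)
qed

context
  fixes \<epsilon> :: real and z0 :: "'a::metric_space" and M :: real
  assumes eps: "0 < \<epsilon>" and gs: "geodesic_space TYPE('a)" and cpl: "complete (UNIV :: 'a set)"
    and rs: "roughly_starlike z0 M"
begin

lemma M_nonneg: "0 \<le> M"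
proof -
  obtain \<gamma> :: "real \<Rightarrow> 'a" where "infdist z0 (\<gamma> ` {0..}) \<le> M" using rs unfolding roughly_starlike_def by blast
  then show ?thesis using infdist_nonneg order_trans by blast
qed

lemma K_ge1: "1 \<le> 2 * exp (\<epsilon> * M) - 1"
proof -
  have "1 \<le> exp (\<epsilon> * M)" using eps M_nonneg by simp
  then show ?thesis by simp
qed

lemma curve_lower:
  assumes r: "rectifiable dist g a b" and gx: "g a = x"
    and lt: "line_integral (rho_eps \<epsilon> z0) g a b < d_bd (d_eps \<epsilon> z0) x / 2"
  shows "rho_eps \<epsilon> z0 x / (2 * (2 * exp (\<epsilon> * M) - 1)) * dist x (g b) \<le> line_integral (rho_eps \<epsilon> z0) g a b"
proof -
  define K where "K = 2 * exp (\<epsilon> * M) - 1"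
  have K: "1 \<le> K" unfolding K_def by (rule K_ge1)
  have "rho_eps \<epsilon> z0 x / (2 * K) * LEN g a b \<le> line_integral (rho_eps \<epsilon> z0) g a b"
  proof (rule LI_const_lower[OF eps r])
    fix s assume s: "s \<in> {0..LEN g a b}"
    obtain t where t: "t \<in> {a..b}" "LEN g a t = s" "arcp g a b s = g t" using arcp_pt[OF r s] .
    define z where "z = g t"
    have "d_eps \<epsilon> z0 x z \<le> line_integral (rho_eps \<epsilon> z0) g a t"
      unfolding z_def using DE_le[OF eps restrict_rect[OF r t(1)] gx refl] .
    also have "\<dots> \<le> line_integral (rho_eps \<epsilon> z0) g a b"
      using restrict_LI[OF r t(1) rho_cont[OF eps]] less_imp_le[OF rho_pos[OF eps]] by blast
    finally have dz: "d_eps \<epsilon> z0 x z < d_bd (d_eps \<epsilon> z0) x / 2" using lt by simp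
    have "d_bd (d_eps \<epsilon> z0) x - d_eps \<epsilon> z0 x z \<le> d_bd (d_eps \<epsilon> z0) z" by (rule dbd_lip[OF eps gs cpl rs])
    moreover have "rho_eps \<epsilon> z0 x / \<epsilon> \<le> d_bd (d_eps \<epsilon> z0) x" by (rule dbd_lower[OF eps gs cpl rs])
    moreover have "d_bd (d_eps \<epsilon> z0) z \<le> rho_eps \<epsilon> z0 z * K / \<epsilon>"
      using dbd_upper[OF eps gs cpl rs, of z] unfolding K_def by simp
    ultimately have "rho_eps \<epsilon> z0 x / (2 * \<epsilon>) < rho_eps \<epsilon> z0 z * K / \<epsilon>" using dz by simp
    then have "rho_eps \<epsilon> z0 x / 2 < rho_eps \<epsilon> z0 z * K" using eps by (simp add: field_simps)
    then have "rho_eps \<epsilon> z0 x / (2 * K) < rho_eps \<epsilon> z0 z" using K by (simp add: field_simps)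
    then show "rho_eps \<epsilon> z0 x / (2 * K) \<le> rho_eps \<epsilon> z0 (arcp g a b s)" using t unfolding z_def by simp
  qed
  moreover have "dist x (g b) \<le> LEN g a b" using dist_le_LEN[OF rect_bdd[OF r] rect_le[OF r]] gx by simp
  moreover have "0 \<le> rho_eps \<epsilon> z0 x / (2 * K)" using K less_imp_le[OF rho_pos[OF eps, of z0 x]] by simp
  ultimately show ?thesis unfolding K_def[symmetric] by (meson mult_left_mono order_trans)
qed

lemma main_result:
  shows "(\<forall>x::'a. \<forall>r. 0 < r \<and> r \<le> d_bd (d_eps \<epsilon> z0) x / 2 \<longrightarrow>
            ball x (exp (- (1 + \<epsilon> * M)) * r / rho_eps \<epsilon> z0 x) \<subseteq> {y. d_eps \<epsilon> z0 x y < r} \<and>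
            {y. d_eps \<epsilon> z0 x y < r} \<subseteq>
              ball x (2 * exp 1 * (2 * exp (\<epsilon> * M) - 1) * r / rho_eps \<epsilon> z0 x))
       \<and> (\<forall>x y::'a. y \<noteq> x \<and> d_eps \<epsilon> z0 x y <
              exp (- (1 + \<epsilon> * M)) * d_bd (d_eps \<epsilon> z0) x / (2 * (2 * exp 1 * (2 * exp (\<epsilon> * M) - 1)))
            \<longrightarrow> rho_eps \<epsilon> z0 x / (2 * exp 1 * (2 * exp (\<epsilon> * M) - 1)) * dist x y < d_eps \<epsilon> z0 x y
              \<and> d_eps \<epsilon> z0 x y \<le> exp (exp (-1)) * rho_eps \<epsilon> z0 x * dist x y)"
proof -
  define K where "K = 2 * exp (\<epsilon> * M) - 1"
  define C1 where "C1 = exp (- (1 + \<epsilon> * M))"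
  define C2 where "C2 = 2 * exp 1 * K"
  have K: "1 \<le> K" unfolding K_def by (rule K_ge1)
  have C1: "0 < C1" "C1 \<le> 1" unfolding C1_def using eps M_nonneg by (auto simp: mult_nonneg_nonneg intro: order_trans[of _ 0])
  have e1: "1 \<le> exp (1::real)" by simp
  have k2: "K \<le> exp 1 * K" using mult_right_mono[OF e1, of K] K by simp
  have C2: "2 * K \<le> C2" "2 \<le> C2" unfolding C2_def using k2 K by linarith+
  have C1K: "C1 * K / 2 < exp (-1)"
  proof -
    have "C1 * K = exp (-1) * (2 - exp (- (\<epsilon> * M)))"
      unfolding C1_def K_def by (simp add: algebra_simps exp_diff exp_minus exp_add[symmetric] field_simps)
    moreover have "0 < exp (- (\<epsilon> * M))" by simp
    ultimately show ?thesis by simp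
  qed
  have dbdU: "d_bd (d_eps \<epsilon> z0) x \<le> rho_eps \<epsilon> z0 x * K / \<epsilon>" for x
    using dbd_upper[OF eps gs cpl rs, of x] unfolding K_def by simp
  have dbdL: "rho_eps \<epsilon> z0 x / \<epsilon> \<le> d_bd (d_eps \<epsilon> z0) x" for x by (rule dbd_lower[OF eps gs cpl rs])
  have upper: "d_eps \<epsilon> z0 x y \<le> rho_eps \<epsilon> z0 x * dist x y * exp (\<epsilon> * dist x y)" for x y
  proof -
    have "d_eps \<epsilon> z0 x y \<le> rho_eps \<epsilon> z0 x * (exp (\<epsilon> * dist x y) - 1) / \<epsilon>" by (rule DE_upper_exp[OF eps gs])
    also have "\<dots> \<le> rho_eps \<epsilon> z0 x * (\<epsilon> * dist x y * exp (\<epsilon> * dist x y)) / \<epsilon>"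
      using exp_minus_one_le[of "\<epsilon> * dist x y"] eps less_imp_le[OF rho_pos[OF eps]]
      by (intro divide_right_mono mult_left_mono) auto
    finally show ?thesis using eps by simp
  qed
  have incl2: "dist x y < 2 * K * r / rho_eps \<epsilon> z0 x"
    if hh: "d_eps \<epsilon> z0 x y < r" "r \<le> d_bd (d_eps \<epsilon> z0) x / 2" for x y r
  proof -
    obtain g a b where g: "rectifiable dist g a b" "g a = x" "g b = y" "line_integral (rho_eps \<epsilon> z0) g a b < r"
      by (rule DE_lt[OF eps gs hh(1)])
    have "rho_eps \<epsilon> z0 x / (2 * K) * dist x y \<le> line_integral (rho_eps \<epsilon> z0) g a b"
      using curve_lower[OF g(1,2)] g(3,4) hh(2) unfolding K_def by simp
    then have "rho_eps \<epsilon> z0 x / (2 * K) * dist x y < r" using g(4) by simp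
    then show ?thesis using K rho_pos[OF eps, of z0 x] by (simp add: field_simps)
  qed
  have partA: "ball x (C1 * r / rho_eps \<epsilon> z0 x) \<subseteq> {y. d_eps \<epsilon> z0 x y < r} \<and>
      {y. d_eps \<epsilon> z0 x y < r} \<subseteq> ball x (C2 * r / rho_eps \<epsilon> z0 x)"
    if r: "0 < r" "r \<le> d_bd (d_eps \<epsilon> z0) x / 2" for x r
  proof
    define \<rho> where "\<rho> = rho_eps \<epsilon> z0 x"
    have \<rho>: "0 < \<rho>" unfolding \<rho>_def by (rule rho_pos[OF eps])
    show "ball x (C1 * r / rho_eps \<epsilon> z0 x) \<subseteq> {y. d_eps \<epsilon> z0 x y < r}"
    proof
      fix y assume "y \<in> ball x (C1 * r / rho_eps \<epsilon> z0 x)"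
      then have D: "dist x y < C1 * r / \<rho>" unfolding \<rho>_def by simp
      have "\<epsilon> * dist x y \<le> \<epsilon> * (C1 * r / \<rho>)" using D eps by (intro mult_left_mono) auto
      also have "\<dots> \<le> \<epsilon> * (C1 * (\<rho> * K / \<epsilon> / 2) / \<rho>)"
      proof -
        have "d_bd (d_eps \<epsilon> z0) x / 2 \<le> \<rho> * K / \<epsilon> / 2"
          unfolding \<rho>_def by (rule divide_right_mono[OF dbdU]) simp
        then have rK: "r \<le> \<rho> * K / \<epsilon> / 2" using r(2) by (rule order_trans[rotated])
        show ?thesis using rK C1 eps \<rho> by (intro mult_left_mono divide_right_mono mult_left_mono) auto
      qed
      also have "\<dots> = C1 * K / 2" using eps \<rho> by (simp add: field_simps)
      finally have ed: "\<epsilon> * dist x y \<le> C1 * K / 2" .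
      have "exp (-1) \<le> (1::real)" by simp
      moreover have "0 \<le> \<epsilon> * M" using eps M_nonneg by simp
      ultimately have "\<epsilon> * dist x y \<le> 1 + \<epsilon> * M" using ed C1K by linarith
      then have "C1 * exp (\<epsilon> * dist x y) \<le> 1" unfolding C1_def by (simp add: exp_add[symmetric])
      have "\<rho> * dist x y < C1 * r" using D \<rho> by (simp add: field_simps)
      then have "\<rho> * dist x y * exp (\<epsilon> * dist x y) < C1 * r * exp (\<epsilon> * dist x y)" by simp
      also have "\<dots> = r * (C1 * exp (\<epsilon> * dist x y))" by (simp add: algebra_simps)
      also have "\<dots> \<le> r" using \<open>C1 * exp (\<epsilon> * dist x y) \<le> 1\<close> r(1) by (intro mult_left_le) auto
      finally show "y \<in> {y. d_eps \<epsilon> z0 x y < r}" using upper[of x y] unfolding \<rho>_def by simp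
    qed
    show "{y. d_eps \<epsilon> z0 x y < r} \<subseteq> ball x (C2 * r / rho_eps \<epsilon> z0 x)"
    proof
      fix y assume "y \<in> {y. d_eps \<epsilon> z0 x y < r}"
      then have "dist x y < 2 * K * r / \<rho>" using incl2 r unfolding \<rho>_def by simp
      also have "\<dots> \<le> C2 * r / \<rho>" using C2 r \<rho> by (intro divide_right_mono mult_right_mono) auto
      finally show "y \<in> ball x (C2 * r / rho_eps \<epsilon> z0 x)" unfolding \<rho>_def by simp
    qed
  qed
  have partB: "rho_eps \<epsilon> z0 x / C2 * dist x y < d_eps \<epsilon> z0 x y \<and>
      d_eps \<epsilon> z0 x y \<le> exp (exp (-1)) * rho_eps \<epsilon> z0 x * dist x y"
    if yx: "y \<noteq> x" and lt: "d_eps \<epsilon> z0 x y < C1 * d_bd (d_eps \<epsilon> z0) x / (2 * C2)" for x y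
  proof
    define \<rho> where "\<rho> = rho_eps \<epsilon> z0 x"
    define r0 where "r0 = C1 * d_bd (d_eps \<epsilon> z0) x / (2 * C2)"
    define D where "D = dist x y"
    have \<rho>: "0 < \<rho>" unfolding \<rho>_def by (rule rho_pos[OF eps])
    have D: "0 < D" unfolding D_def using yx by simp
    have dbd0: "0 \<le> d_bd (d_eps \<epsilon> z0) x" using dbdL[of x] \<rho> eps unfolding \<rho>_def
      by (smt (verit) divide_pos_pos)
    have r0: "r0 \<le> d_bd (d_eps \<epsilon> z0) x / 2"
    proof -
      have "C1 / C2 \<le> 1" using C1 C2 by simp
      then have "C1 / C2 * d_bd (d_eps \<epsilon> z0) x \<le> 1 * d_bd (d_eps \<epsilon> z0) x" using dbd0 by (intro mult_right_mono) auto
      then show ?thesis unfolding r0_def by simp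
    qed
    have key: "\<rho> / (2 * K) * D < r" if hh: "d_eps \<epsilon> z0 x y < r" "r \<le> r0" for r
    proof -
      obtain g a b where g: "rectifiable dist g a b" "g a = x" "g b = y" "line_integral (rho_eps \<epsilon> z0) g a b < r"
        by (rule DE_lt[OF eps gs hh(1)])
      have "\<rho> / (2 * K) * D \<le> line_integral (rho_eps \<epsilon> z0) g a b"
        using curve_lower[OF g(1,2)] g(3,4) hh(2) r0 unfolding K_def \<rho>_def D_def by simp
      then show ?thesis using g(4) by simp
    qed
    show "rho_eps \<epsilon> z0 x / C2 * dist x y < d_eps \<epsilon> z0 x y"
    proof (rule ccontr)
      assume "\<not> ?thesis"
      then have le: "d_eps \<epsilon> z0 x y \<le> \<rho> / C2 * D" unfolding \<rho>_def D_def by simp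
      have "\<rho> / C2 * D < \<rho> / (2 * K) * D"
      proof -
        have "2 * K < C2" unfolding C2_def using K by (simp add: less_le)
        then have "\<rho> / C2 < \<rho> / (2 * K)" using \<rho> K by (intro divide_strict_left_mono) auto
        then show ?thesis using D by (intro mult_strict_right_mono)
      qed
      then have "d_eps \<epsilon> z0 x y < min (\<rho> / (2 * K) * D) r0" using le lt unfolding r0_def by simp
      then have "\<rho> / (2 * K) * D < min (\<rho> / (2 * K) * D) r0" by (rule key) simp
      then show False by simp
    qed
    show "d_eps \<epsilon> z0 x y \<le> exp (exp (-1)) * rho_eps \<epsilon> z0 x * dist x y"
    proof -
      have "\<rho> / (2 * K) * D < r0" using key[of r0] lt unfolding r0_def by simp
      then have "D < 2 * K * r0 / \<rho>" using \<rho> K by (simp add: field_simps)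
      also have "\<dots> = 2 * K * C1 * d_bd (d_eps \<epsilon> z0) x / (2 * C2 * \<rho>)" unfolding r0_def by simp
      also have "\<dots> \<le> 2 * K * C1 * (\<rho> * K / \<epsilon>) / (2 * C2 * \<rho>)"
        using dbdU[of x] K C1 C2 \<rho> unfolding \<rho>_def
        by (intro divide_right_mono mult_left_mono) auto
      also have "\<dots> = C1 * K / 2 * (2 * K / C2) / \<epsilon>" using \<rho> C2 eps by (simp add: field_simps)
      also have "\<dots> \<le> C1 * K / 2 / \<epsilon>"
      proof -
        have "2 * K / C2 \<le> 1" using C2 by simp
        moreover have "0 \<le> C1 * K / 2" using C1 K by simp
        ultimately have "C1 * K / 2 * (2 * K / C2) \<le> C1 * K / 2" using mult_left_mono[of "2 * K / C2" 1 "C1 * K / 2"] by simp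
        then show ?thesis using eps by (intro divide_right_mono) auto
      qed
      finally have "\<epsilon> * D < C1 * K / 2" using eps by (simp add: field_simps)
      then have "\<epsilon> * D \<le> exp (-1)" using C1K by simp
      then have "exp (\<epsilon> * D) \<le> exp (exp (-1))" by simp
      then have "\<rho> * D * exp (\<epsilon> * D) \<le> \<rho> * D * exp (exp (-1))" using \<rho> D by simp
      then show ?thesis using upper[of x y] unfolding \<rho>_def D_def by (simp add: algebra_simps)
    qed
  qed
  show ?thesis
    using partA partB unfolding C1_def C2_def K_def by (simp add: mult.assoc)
qed

end


theorem theorem2p10:
  fixes z0 :: "'a::metric_space" and \<delta> M \<epsilon> :: real
  assumes hyp: "gromov_hyperbolic TYPE('a) \<delta>"
    and lc: "locally_compact_space (euclidean :: 'a topology)"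
    and rs: "roughly_starlike z0 M"
    and eps: "0 < \<epsilon>"
    and eps0_unif: "uniform_wrt (d_eps \<epsilon> z0)"
    and eps0_cpt: "totally_bounded_wrt (d_eps \<epsilon> z0)"
    and eps0_geod: "completion_geodesic (d_eps \<epsilon> z0)"
  shows "(\<forall>x::'a. \<forall>r. 0 < r \<and> r \<le> d_bd (d_eps \<epsilon> z0) x / 2 \<longrightarrow>
            ball x (exp (- (1 + \<epsilon> * M)) * r / rho_eps \<epsilon> z0 x) \<subseteq> {y. d_eps \<epsilon> z0 x y < r} \<and>
            {y. d_eps \<epsilon> z0 x y < r} \<subseteq>
              ball x (2 * exp 1 * (2 * exp (\<epsilon> * M) - 1) * r / rho_eps \<epsilon> z0 x))
       \<and> (\<forall>x y::'a. y \<noteq> x \<and> d_eps \<epsilon> z0 x y <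
              exp (- (1 + \<epsilon> * M)) * d_bd (d_eps \<epsilon> z0) x / (2 * (2 * exp 1 * (2 * exp (\<epsilon> * M) - 1)))
            \<longrightarrow> rho_eps \<epsilon> z0 x / (2 * exp 1 * (2 * exp (\<epsilon> * M) - 1)) * dist x y < d_eps \<epsilon> z0 x y
              \<and> d_eps \<epsilon> z0 x y \<le> exp (exp (-1)) * rho_eps \<epsilon> z0 x * dist x y)"
proof -
  have cpl: "complete (UNIV :: 'a set)" and gs: "geodesic_space TYPE('a)"
    using hyp unfolding gromov_hyperbolic_def by auto
  show ?thesis by (rule main_result[OF eps gs cpl rs])
qed

end
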